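(* Let $K$ be an $(\mathbb{F}_q,\mathbb{Z})$-field and let $A_1,A_2\subseteq K^{k+1}$ be $\mathcal{L}_{\mathrm{dist}}$-cells with centers $c_1$, resp. $c_2$. Then $A_1\cap A_2$ can be written as a finite union of pairwise disjoint $\mathcal{L}_{\mathrm{dist}}$-cells, each having center $c_1$ or $c_2$.
   Context: Let $K$ be an $(\mathbb{F}_q,\mathbb{Z})$-field: a valued field with residue field isomorphic to $\mathbb{F}_q$ and value group elementarily equivalent to $\mathbb{Z}$. Notation: $\mathrm{ord}$ is the valuation ($\mathrm{ord}\,0=+\infty$), $\mathcal{M}_K$ the maximal ideal of the valuation ring, $\pi=\pi_K$ an element of smallest positive order; integers $\ell$ added to orders mean $\ell\cdot\mathrm{ord}\,\pi$. $P_n$ is the set of nonzero $n$-th powers; $\mathrm{ac}_m:K^\times\to(\mathcal{O}_K/\pi^m)^\times$ the unique homomorphism with $\mathrm{ac}_m(\pi)=1$, $\mathrm{ac}_m(u)\equiv u\bmod\pi^m$ for units $u$; $Q_{n,m}=\{x\in P_n(1+\mathcal{M}_K^m):\mathrm{ac}_m(x)=1\}$, $\lambda Q_{n,m}=\{\lambda t:t\in Q_{n,m}\}$ ($0\cdot Q_{n,m}=\{0\}$). $R_{n,m}(x,y,z)\Leftrightarrow y-x\in zQ_{n,m}$; $D^{(4)}(x,y,z,t)\Leftrightarrow\mathrm{ord}(x-y)<\mathrm{ord}(z-t)$; $\mathcal{L}_{\mathrm{dist}}=(D^{(4)},\{R_{n,m}\}_{n,m>0})$; definable means with parameters from $K$.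 An $\mathcal{L}_{\mathrm{dist}}$-polynomial in variables $x_1,\dots,x_k$ is a function of one of the forms $a$, $\pi^j(x_i-a)$, $\pi^j(x_i-x_{i'})$ with $a\in K$, $j\in\mathbb{Z}$, $1\le i,i'\le k$. Let $\Delta_{\mathrm{dist}}$ be the set of all such polynomials (for all $k$). An $(\mathcal{L}_{\mathrm{dist}},\Delta)$-precell in $K^k$ is a set defined by a Boolean combination of conditions $\mathrm{ord}\,a_1(x)<\mathrm{ord}\,a_2(x)+\ell$ ($a_i\in\Delta$ in $k$ variables, $\ell\in\mathbb{Z}$) and $b_1(x)-b_2(x)\in\lambda Q_{n,m}$ ($b_i$ quantifier-free definable functions, $\lambda\in K$). An $\mathcal{L}_{\mathrm{dist}}$-cell in $K^{k+1}$ is a set $\{(x,t)\in D\times K:\mathrm{ord}\,a_1(x)\ \square_1\ \mathrm{ord}(t-c(x))\ \square_2\ \mathrm{ord}\,a_2(x),\ t-c(x)\in\lambda Q_{n,m}\}$ with $D$ an $(\mathcal{L}_{\mathrm{dist}},\Delta_{\mathrm{dist}})$-precell, $\lambda\in K$, $a_1,a_2\in\Delta_{\mathrm{dist}}$, each $\square_i$ either $<$ or "no condition", and center $c(x)$ either a constant of $K$ or one of the variables $x_1,\dots,x_k$. *)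

theory Defs
  imports Main
begin

text \<open>A valued field is given by a field type 'k and a map v from 'k to an ordered
abelian group 'g, meant on nonzero elements; ord 0 = infinity is modelled by None.\<close>

definition valuation :: "('k::field \<Rightarrow> 'g::linordered_ab_group_add) \<Rightarrow> bool" where
  "valuation v \<longleftrightarrow>
     (\<forall>x y. x \<noteq> 0 \<longrightarrow> y \<noteq> 0 \<longrightarrow> v (x * y) = v x + v y) \<and>
     (\<forall>x y. x \<noteq> 0 \<longrightarrow> y \<noteq> 0 \<longrightarrow> x + y \<noteq> 0 \<longrightarrow> min (v x) (v y) \<le> v (x + y)) \<and>
     (\<forall>g. \<exists>x. x \<noteq> 0 \<and> v x = g)"

definition ordv :: "('k::field \<Rightarrow> 'g) \<Rightarrow> 'k \<Rightarrow> 'g option" where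
  "ordv v x = (if x = 0 then None else Some (v x))"

fun olt :: "'g::linorder option \<Rightarrow> 'g option \<Rightarrow> bool" where
  "olt (Some a) (Some b) = (a < b)"
| "olt (Some a) None = True"
| "olt None _ = False"

definition nsmul :: "nat \<Rightarrow> 'g::ab_group_add \<Rightarrow> 'g" where
  "nsmul n g = (\<Sum>i<n. g)"

text \<open>Z-groups: the models of the theory of (Z,+,<) (Presburger arithmetic).\<close>
definition Z_group :: "'g::linordered_ab_group_add itself \<Rightarrow> bool" where
  "Z_group _ \<longleftrightarrow> (\<exists>e::'g. 0 < e \<and> (\<forall>g. 0 < g \<longrightarrow> e \<le> g) \<and>
      (\<forall>n>0. \<forall>g. \<exists>h r. r < n \<and> g = nsmul n h + nsmul r e))"

definition val_ring :: "('k::field \<Rightarrow> 'g::linordered_ab_group_add) \<Rightarrow> 'k set" where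
  "val_ring v = {x. x = 0 \<or> 0 \<le> v x}"

definition max_ideal :: "('k::field \<Rightarrow> 'g::linordered_ab_group_add) \<Rightarrow> 'k set" where
  "max_ideal v = {x. x = 0 \<or> 0 < v x}"

text \<open>The residue field O/M, as the set of its cosets.\<close>
definition residue_field :: "('k::field \<Rightarrow> 'g::linordered_ab_group_add) \<Rightarrow> 'k set set" where
  "residue_field v = (\<lambda>x. {y \<in> val_ring v. y - x \<in> max_ideal v}) ` val_ring v"

text \<open>(F_q,Z)-field with a chosen uniformizer pi (element of smallest positive order).\<close>
definition FqZ_field :: "('k::field \<Rightarrow> 'g::linordered_ab_group_add) \<Rightarrow> 'k \<Rightarrow> nat \<Rightarrow> bool" where
  "FqZ_field v pi q \<longleftrightarrow> valuation v \<and> Z_group TYPE('g) \<and>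
     finite (residue_field v) \<and> card (residue_field v) = q \<and>
     pi \<noteq> 0 \<and> 0 < v pi \<and> (\<forall>x. x \<noteq> 0 \<longrightarrow> 0 < v x \<longrightarrow> v pi \<le> v x)"

definition Mpow :: "('k::field \<Rightarrow> 'g::linordered_ab_group_add) \<Rightarrow> 'k \<Rightarrow> nat \<Rightarrow> 'k set" where
  "Mpow v pi m = {x. x = 0 \<or> v (pi ^ m) \<le> v x}"

definition cls :: "('k::field \<Rightarrow> 'g::linordered_ab_group_add) \<Rightarrow> 'k \<Rightarrow> nat \<Rightarrow> 'k \<Rightarrow> 'k set" where
  "cls v pi m y = {z \<in> val_ring v. z - y \<in> Mpow v pi m}"

text \<open>f is a representative-valued version of a homomorphism K^x -> (O/pi^m)^x with
ac_m(pi) = 1 and ac_m(u) = u mod pi^m for units u.\<close>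
definition is_ac_rep :: "('k::field \<Rightarrow> 'g::linordered_ab_group_add) \<Rightarrow> 'k \<Rightarrow> nat \<Rightarrow> ('k \<Rightarrow> 'k) \<Rightarrow> bool" where
  "is_ac_rep v pi m f \<longleftrightarrow>
     (\<forall>x. x \<noteq> 0 \<longrightarrow> f x \<noteq> 0 \<and> v (f x) = 0) \<and>
     (\<forall>x y. x \<noteq> 0 \<longrightarrow> y \<noteq> 0 \<longrightarrow> f (x * y) - f x * f y \<in> Mpow v pi m) \<and>
     f pi - 1 \<in> Mpow v pi m \<and>
     (\<forall>u. u \<noteq> 0 \<longrightarrow> v u = 0 \<longrightarrow> f u - u \<in> Mpow v pi m)"

text \<open>ac_m : the unique such homomorphism, with values in O/pi^m (as classes); 0 maps to {}.\<close>
definition ac :: "('k::field \<Rightarrow> 'g::linordered_ab_group_add) \<Rightarrow> 'k \<Rightarrow> nat \<Rightarrow> 'k \<Rightarrow> 'k set" where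
  "ac v pi m = (THE h. h 0 = {} \<and>
       (\<exists>f. is_ac_rep v pi m f \<and> (\<forall>x. x \<noteq> 0 \<longrightarrow> h x = cls v pi m (f x))))"

definition PnM :: "('k::field \<Rightarrow> 'g::linordered_ab_group_add) \<Rightarrow> 'k \<Rightarrow> nat \<Rightarrow> nat \<Rightarrow> 'k set" where
  "PnM v pi n m = {y ^ n * (1 + z) | y z. y \<noteq> 0 \<and> z \<in> Mpow v pi m}"

definition Qnm :: "('k::field \<Rightarrow> 'g::linordered_ab_group_add) \<Rightarrow> 'k \<Rightarrow> nat \<Rightarrow> nat \<Rightarrow> 'k set" where
  "Qnm v pi n m = {x \<in> PnM v pi n m. ac v pi m x = cls v pi m 1}"

definition lamQ :: "('k::field \<Rightarrow> 'g::linordered_ab_group_add) \<Rightarrow> 'k \<Rightarrow> 'k \<Rightarrow> nat \<Rightarrow> nat \<Rightarrow> 'k set" where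
  "lamQ v pi lam n m = (\<lambda>t. lam * t) ` Qnm v pi n m"

text \<open>Points of K^N are lists of length N; terms are variables or parameters.\<close>
datatype 'k trm = TVar nat | TConst 'k

fun teval :: "'k list \<Rightarrow> 'k trm \<Rightarrow> 'k" where
  "teval x (TVar i) = x ! i"
| "teval x (TConst a) = a"

fun twf :: "nat \<Rightarrow> 'k trm \<Rightarrow> bool" where
  "twf N (TVar i) = (i < N)"
| "twf N (TConst a) = True"

inductive_set qf_preds :: "('k::field \<Rightarrow> 'g::linordered_ab_group_add) \<Rightarrow> 'k \<Rightarrow> nat \<Rightarrow> ('k list \<Rightarrow> bool) set"
  for v pi N where
  qf_eq: "twf N s \<Longrightarrow> twf N t \<Longrightarrow> (\<lambda>x. teval x s = teval x t) \<in> qf_preds v pi N"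
| qf_D: "twf N s1 \<Longrightarrow> twf N s2 \<Longrightarrow> twf N s3 \<Longrightarrow> twf N s4 \<Longrightarrow>
     (\<lambda>x. olt (ordv v (teval x s1 - teval x s2)) (ordv v (teval x s3 - teval x s4))) \<in> qf_preds v pi N"
| qf_R: "0 < n \<Longrightarrow> 0 < m \<Longrightarrow> twf N s1 \<Longrightarrow> twf N s2 \<Longrightarrow> twf N s3 \<Longrightarrow>
     (\<lambda>x. teval x s2 - teval x s1 \<in> lamQ v pi (teval x s3) n m) \<in> qf_preds v pi N"
| qf_neg: "P \<in> qf_preds v pi N \<Longrightarrow> (\<lambda>x. \<not> P x) \<in> qf_preds v pi N"
| qf_conj: "P \<in> qf_preds v pi N \<Longrightarrow> P' \<in> qf_preds v pi N \<Longrightarrow> (\<lambda>x. P x \<and> P' x) \<in> qf_preds v pi N"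

definition qf_def_fun :: "('k::field \<Rightarrow> 'g::linordered_ab_group_add) \<Rightarrow> 'k \<Rightarrow> nat \<Rightarrow> ('k list \<Rightarrow> 'k) \<Rightarrow> bool" where
  "qf_def_fun v pi k f \<longleftrightarrow> (\<exists>P \<in> qf_preds v pi (Suc k).
      \<forall>x y. length x = k \<longrightarrow> (P (x @ [y]) \<longleftrightarrow> y = f x))"

datatype 'k dpoly = PConst 'k | PVarC int nat 'k | PVarVar int nat nat

fun peval :: "'k::field \<Rightarrow> 'k list \<Rightarrow> 'k dpoly \<Rightarrow> 'k" where
  "peval pi x (PConst a) = a"
| "peval pi x (PVarC j i a) = pi powi j * (x ! i - a)"
| "peval pi x (PVarVar j i i') = pi powi j * (x ! i - x ! i')"

fun pwf :: "nat \<Rightarrow> 'k dpoly \<Rightarrow> bool" where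
  "pwf k (PConst a) = True"
| "pwf k (PVarC j i a) = (i < k)"
| "pwf k (PVarVar j i i') = (i < k \<and> i' < k)"

text \<open>Conditions defining (L_dist, Delta_dist)-precells in K^k.
  ord a1(x) < ord a2(x) + l is written as ord a1(x) < ord (pi^l a2(x)).\<close>
inductive_set precell_conds :: "('k::field \<Rightarrow> 'g::linordered_ab_group_add) \<Rightarrow> 'k \<Rightarrow> nat \<Rightarrow> ('k list \<Rightarrow> bool) set"
  for v pi k where
  pc_ord: "pwf k a1 \<Longrightarrow> pwf k a2 \<Longrightarrow>
     (\<lambda>x. olt (ordv v (peval pi x a1)) (ordv v (pi powi l * peval pi x a2))) \<in> precell_conds v pi k"
| pc_Q: "qf_def_fun v pi k b1 \<Longrightarrow> qf_def_fun v pi k b2 \<Longrightarrow> 0 < n \<Longrightarrow> 0 < m \<Longrightarrow>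
     (\<lambda>x. b1 x - b2 x \<in> lamQ v pi lam n m) \<in> precell_conds v pi k"
| pc_neg: "P \<in> precell_conds v pi k \<Longrightarrow> (\<lambda>x. \<not> P x) \<in> precell_conds v pi k"
| pc_conj: "P \<in> precell_conds v pi k \<Longrightarrow> P' \<in> precell_conds v pi k \<Longrightarrow> (\<lambda>x. P x \<and> P' x) \<in> precell_conds v pi k"

definition precell :: "('k::field \<Rightarrow> 'g::linordered_ab_group_add) \<Rightarrow> 'k \<Rightarrow> nat \<Rightarrow> 'k list set \<Rightarrow> bool" where
  "precell v pi k D \<longleftrightarrow> (\<exists>P \<in> precell_conds v pi k. D = {x. length x = k \<and> P x})"

text \<open>Centers: a constant of K or one of the variables x_1..x_k (0-indexed).\<close>
datatype 'k center = CConst 'k | CVar nat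

fun ceval :: "'k list \<Rightarrow> 'k center \<Rightarrow> 'k" where
  "ceval x (CConst a) = a"
| "ceval x (CVar i) = x ! i"

fun cwf :: "nat \<Rightarrow> 'k center \<Rightarrow> bool" where
  "cwf k (CConst a) = True"
| "cwf k (CVar i) = (i < k)"

text \<open>L_dist-cell in K^(k+1) with center c; points are pairs (x, t), x in K^k.
  a1, a2 = None means the corresponding condition is absent.\<close>
definition is_cell :: "('k::field \<Rightarrow> 'g::linordered_ab_group_add) \<Rightarrow> 'k \<Rightarrow> nat \<Rightarrow>
    ('k list \<times> 'k) set \<Rightarrow> 'k center \<Rightarrow> bool" where
  "is_cell v pi k A c \<longleftrightarrow> cwf k c \<and>
    (\<exists>D lam n m a1 a2. precell v pi k D \<and> 0 < n \<and> 0 < m \<and>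
       (\<forall>p. a1 = Some p \<longrightarrow> pwf k p) \<and> (\<forall>p. a2 = Some p \<longrightarrow> pwf k p) \<and>
       A = {(x, t). x \<in> D \<and>
              (case a1 of None \<Rightarrow> True
                 | Some p \<Rightarrow> olt (ordv v (peval pi x p)) (ordv v (t - ceval x c))) \<and>
              (case a2 of None \<Rightarrow> True
                 | Some p \<Rightarrow> olt (ordv v (t - ceval x c)) (ordv v (peval pi x p))) \<and>
              t - ceval x c \<in> lamQ v pi lam n m})"

end

theory Submission
  imports Defs
begin


locale fqz =
  fixes v :: "'k::field \<Rightarrow> 'g::linordered_ab_group_add" and pi :: 'k and q :: nat
  assumes fqz: "FqZ_field v pi q"
begin

lemma val: "valuation v" using fqz by (simp add: FqZ_field_def)
lemma vmult: "x \<noteq> 0 \<Longrightarrow> y \<noteq> 0 \<Longrightarrow> v (x * y) = v x + v y"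
  using val by (simp add: valuation_def)
lemma vadd_min: "x \<noteq> 0 \<Longrightarrow> y \<noteq> 0 \<Longrightarrow> x + y \<noteq> 0 \<Longrightarrow> min (v x) (v y) \<le> v (x + y)"
  using val by (simp add: valuation_def)
lemma vsurj: "\<exists>x. x \<noteq> 0 \<and> v x = g"
  using val by (simp add: valuation_def)
lemma pi_nz: "pi \<noteq> 0" using fqz by (simp add: FqZ_field_def)
lemma pi_pos: "0 < v pi" using fqz by (simp add: FqZ_field_def)
lemma pi_min: "x \<noteq> 0 \<Longrightarrow> 0 < v x \<Longrightarrow> v pi \<le> v x" using fqz by (simp add: FqZ_field_def)
lemma disc: "0 < (g::'g) \<Longrightarrow> v pi \<le> g"
  using vsurj[of g] pi_min by blast

lemma v1: "v 1 = 0"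
  using vmult[of 1 1] by simp

lemma vinv: "x \<noteq> 0 \<Longrightarrow> v (inverse x) = - v x"
  using vmult[of x "inverse x"] v1 by (simp add: eq_neg_iff_add_eq_0 add.commute)

lemma vdiv: "x \<noteq> 0 \<Longrightarrow> y \<noteq> 0 \<Longrightarrow> v (x / y) = v x - v y"
  by (simp add: divide_inverse vmult vinv)

lemma vm1: "v (-1) = 0"
proof -
  have "v (-1) + v (-1) = 0" using vmult[of "-1" "-1"] v1 by simp
  thus ?thesis
    by (metis add_neg_neg add_pos_pos less_irrefl linorder_neqE)
qed

lemma vneg: "v (- x) = v x"
proof (cases "x = 0")
  case True thus ?thesis by simp
next
  case False
  have "- x = (-1) * x" by simp
  thus ?thesis using vmult[of "-1" x] False vm1 by simp
qed

lemma vsub_min: "x \<noteq> 0 \<Longrightarrow> y \<noteq> 0 \<Longrightarrow> x - y \<noteq> 0 \<Longrightarrow> min (v x) (v y) \<le> v (x - y)"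
  using vadd_min[of x "-y"] vneg[of y] by simp

lemma vadd_strict: assumes "x \<noteq> 0" "v x < v y" shows "x + y \<noteq> 0 \<and> v (x + y) = v x"
proof (cases "y = 0")
  case True thus ?thesis using assms by simp
next
  case False
  have ne: "x + y \<noteq> 0"
  proof
    assume "x + y = 0" then have "y = - x" by (simp add: eq_neg_iff_add_eq_0 add.commute)
    then show False using assms vneg by simp
  qed
  have a: "min (v x) (v y) \<le> v (x + y)" using vadd_min assms False ne by blast
  have b: "v x \<le> v (x + y)" using a assms by simp
  have c: "min (v (x + y)) (v y) \<le> v x"
    using vsub_min[of "x + y" y] ne False assms by simp
  show ?thesis using b c assms ne by (auto simp: min_def split: if_splits)
qed

lemma vpow: "x \<noteq> 0 \<Longrightarrow> v (x ^ n) = nsmul n (v x)"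
  by (induction n) (auto simp: nsmul_def v1 vmult add.commute)

lemma nsmul_Suc: "nsmul (Suc n) g = g + nsmul n g"
  by (simp add: nsmul_def add.commute)
lemma nsmul_0[simp]: "nsmul 0 g = 0" by (simp add: nsmul_def)

lemma vpowi: "x \<noteq> 0 \<Longrightarrow> v (x powi (i + j)) = v (x powi i) + v (x powi j)"
  by (simp add: power_int_add vmult)

lemma vpowi_Suc: "v (pi powi (i + 1)) = v (pi powi i) + v pi"
  using vpowi[OF pi_nz, of i 1] by simp

lemma vpowi_mono: "i < j \<Longrightarrow> v (pi powi i) < v (pi powi j)"
proof -
  assume "i < j"
  then obtain n where n: "j = i + int (Suc n)" by (metis less_imp_Suc_add zless_iff_Suc_zadd)
  have "v (pi powi (int (Suc n))) > 0"
  proof (induction n)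
    case 0 thus ?case using pi_pos by simp
  next
    case (Suc n)
    have "v (pi powi (int (Suc (Suc n)))) = v (pi powi (int (Suc n))) + v pi"
      using vpowi_Suc[of "int (Suc n)"] by (simp add: add.commute)
    thus ?case using Suc pi_pos by (simp add: add_pos_pos)
  qed
  thus ?thesis using vpowi[OF pi_nz, of i "int (Suc n)"] n by simp
qed

lemma vpowi_mono_le: "i \<le> j \<Longrightarrow> v (pi powi i) \<le> v (pi powi j)"
  using vpowi_mono by (cases "i = j") (auto intro: less_imp_le)

lemma vpowi_0: "v (pi powi 0) = 0" by (simp add: v1)

lemma vpow_pi: "v (pi ^ n) = v (pi powi (int n))" by simp

lemma disc_between: "v (pi powi i) < g \<Longrightarrow> g < v (pi powi (i + 1)) \<Longrightarrow> False"
  using disc[of "g - v (pi powi i)"] vpowi_Suc[of i] by (auto simp: algebra_simps)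

lemma disc_step: "v (pi powi i) < g \<Longrightarrow> v (pi powi (i + 1)) \<le> g"
  using disc_between[of i g] by force

lemma disc_le: "g < v (pi powi (i + 1)) \<Longrightarrow> g \<le> v (pi powi i)"
  using disc_step[of i g] by force

lemma multiple: assumes "v (pi powi a) \<le> g" "g < v (pi powi b)"
  shows "\<exists>i. a \<le> i \<and> i < b \<and> g = v (pi powi i)"
proof -
  have "a < b" using assms vpowi_mono_le[of b a] by force
  then obtain n where n: "b = a + int (Suc n)" by (metis less_imp_Suc_add zless_iff_Suc_zadd)
  show ?thesis using assms n
  proof (induction n arbitrary: b)
    case 0
    then show ?case using disc_between[of a g] by (cases "v (pi powi a) = g") force+
  next
    case (Suc n)
    show ?case
    proof (cases "g < v (pi powi (a + int (Suc n)))")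
      case True
      from Suc.IH[OF Suc.prems(1) True] show ?thesis using Suc.prems by auto
    next
      case False
      have e: "a + int (Suc n) + 1 = b" using Suc.prems by simp
      have "g = v (pi powi (a + int (Suc n)))"
        using False Suc.prems(2) disc_between[of "a + int (Suc n)" g] unfolding e by force
      thus ?thesis using Suc.prems by (intro exI[of _ "a + int (Suc n)"]) auto
    qed
  qed
qed

end


context fqz begin

abbreviation MP where "MP m \<equiv> Mpow v pi m"
definition unit :: "'k \<Rightarrow> bool" where "unit x \<longleftrightarrow> x \<noteq> 0 \<and> v x = 0"
abbreviation VR where "VR \<equiv> val_ring v"

lemma MP_iff: "x \<in> MP m \<longleftrightarrow> x = 0 \<or> v (pi powi int m) \<le> v x"
  by (simp add: Mpow_def)

lemma MP0: "0 \<in> MP m" by (simp add: MP_iff)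
lemma O_iff: "x \<in> VR \<longleftrightarrow> x = 0 \<or> 0 \<le> v x" by (simp add: val_ring_def)
lemma O_MP0: "VR = MP 0" by (auto simp: O_iff MP_iff v1)
lemma MP_mono: "m' \<le> m \<Longrightarrow> x \<in> MP m \<Longrightarrow> x \<in> MP m'"
  using vpowi_mono_le[of "int m'" "int m"] by (auto simp: MP_iff)
lemma MP_O: "x \<in> MP m \<Longrightarrow> x \<in> VR"
  using MP_mono[of 0 m x] O_MP0 by auto

lemma MP_neg: "x \<in> MP m \<Longrightarrow> - x \<in> MP m" by (auto simp: MP_iff vneg)
lemma MP_add: assumes "x \<in> MP m" "y \<in> MP m" shows "x + y \<in> MP m"
proof (cases "x = 0 \<or> y = 0 \<or> x + y = 0")
  case True thus ?thesis using assms MP0 by auto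
next
  case False
  then show ?thesis using vadd_min[of x y] assms by (auto simp: MP_iff min_def split: if_splits)
qed
lemma MP_sub: "x \<in> MP m \<Longrightarrow> y \<in> MP m \<Longrightarrow> x - y \<in> MP m"
  using MP_add[of x m "- y"] MP_neg by simp
lemma MP_mult: assumes "x \<in> MP a" "y \<in> MP b" shows "x * y \<in> MP (a + b)"
proof (cases "x = 0 \<or> y = 0")
  case True thus ?thesis by (auto simp: MP_iff)
next
  case False
  have "v (pi powi int (a + b)) = v (pi powi int a) + v (pi powi int b)"
    using vpowi[OF pi_nz, of "int a" "int b"] by simp
  thus ?thesis using assms False by (auto simp: MP_iff vmult intro: add_mono)
qed
lemma MP_multO: "x \<in> MP a \<Longrightarrow> y \<in> VR \<Longrightarrow> x * y \<in> MP a"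
  using MP_mult[of x a y 0] O_MP0 by auto
lemma MP_multO': "x \<in> VR \<Longrightarrow> y \<in> MP a \<Longrightarrow> x * y \<in> MP a"
  using MP_multO[of y a x] by (simp add: mult.commute)
lemma O_mult: "x \<in> VR \<Longrightarrow> y \<in> VR \<Longrightarrow> x * y \<in> VR"
  using MP_mult[of x 0 y 0] O_MP0 by auto
lemma O_add: "x \<in> VR \<Longrightarrow> y \<in> VR \<Longrightarrow> x + y \<in> VR"
  using MP_add[of x 0 y] O_MP0 by auto
lemma O_sub: "x \<in> VR \<Longrightarrow> y \<in> VR \<Longrightarrow> x - y \<in> VR"
  using MP_sub[of x 0 y] O_MP0 by auto
lemma O_1: "1 \<in> VR" by (simp add: O_iff v1)
lemma pow_O: "x \<in> VR \<Longrightarrow> x ^ n \<in> VR" by (induction n) (auto intro: O_mult O_1)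
lemma pi_pow_MP: "pi ^ m \<in> MP m" by (simp add: MP_iff)
lemma pi_O: "pi \<in> VR" using pi_pos by (simp add: O_iff less_imp_le)

lemma unit_O: "unit x \<Longrightarrow> x \<in> VR" by (simp add: unit_def O_iff)
lemma unit_mult: "unit x \<Longrightarrow> unit y \<Longrightarrow> unit (x * y)" by (simp add: unit_def vmult)
lemma unit_inv: "unit x \<Longrightarrow> unit (inverse x)" by (simp add: unit_def vinv)
lemma unit_pow: "unit x \<Longrightarrow> unit (x ^ n)" by (induction n) (auto simp: unit_def v1 vmult)
lemma unit_1: "unit 1" by (simp add: unit_def v1)

lemma MP_unit_cancel: assumes "unit w" "w * x \<in> MP m" shows "x \<in> MP m"
proof -
  have "inverse w * (w * x) \<in> MP m" using MP_multO'[OF unit_O[OF unit_inv[OF assms(1)]] assms(2)] .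
  have "inverse w * (w * x) = x" using assms(1) by (simp add: unit_def field_simps)
  thus ?thesis using \<open>inverse w * (w * x) \<in> MP m\<close> by metis
qed

lemma MP1_iff: "x \<in> MP 1 \<longleftrightarrow> x = 0 \<or> 0 < v x"
  using disc[of "v x"] pi_pos by (auto simp: MP_iff)

lemma MP_Suc: assumes "x \<in> VR" shows "pi ^ m * x \<in> MP m"
  using MP_multO[OF pi_pow_MP assms] .

lemma res1: "\<exists>R. finite R \<and> R \<subseteq> VR \<and> (\<forall>x\<in>VR. \<exists>r\<in>R. x - r \<in> MP 1)"
proof -
  have fin: "finite (residue_field v)" using fqz by (simp add: FqZ_field_def)
  define cl where "cl x = {y \<in> VR. y - x \<in> max_ideal v}" for x
  have mi: "max_ideal v = MP 1" unfolding max_ideal_def using MP1_iff by blast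
  define R where "R = (\<lambda>C. SOME x. x \<in> VR \<and> cl x = C) ` residue_field v"
  have rf: "residue_field v = cl ` VR" by (simp add: residue_field_def cl_def)
  show ?thesis
  proof (intro exI conjI ballI)
    show "finite R" using fin by (simp add: R_def)
    show "R \<subseteq> VR"
    proof
      fix r assume "r \<in> R"
      then obtain C where C: "C \<in> residue_field v" "r = (SOME x. x \<in> VR \<and> cl x = C)" by (auto simp: R_def)
      have "\<exists>x. x \<in> VR \<and> cl x = C" using C(1) rf by auto
      thus "r \<in> VR" using someI_ex[of "\<lambda>x. x \<in> VR \<and> cl x = C"] C(2) by auto
    qed
    fix x assume x: "x \<in> VR"
    let ?r = "SOME y. y \<in> VR \<and> cl y = cl x"
    have "\<exists>y. y \<in> VR \<and> cl y = cl x" using x by auto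
    hence r: "?r \<in> VR \<and> cl ?r = cl x" using someI_ex[of "\<lambda>y. y \<in> VR \<and> cl y = cl x"] by blast
    have "x \<in> cl x" using x MP0 by (simp add: cl_def mi)
    hence "x \<in> cl ?r" using r by simp
    hence "x - ?r \<in> MP 1" by (simp add: cl_def mi)
    moreover have "?r \<in> R" using x rf by (auto simp: R_def)
    ultimately show "\<exists>r\<in>R. x - r \<in> MP 1" by blast
  qed
qed

lemma resm: "\<exists>R. finite R \<and> R \<subseteq> VR \<and> (\<forall>x\<in>VR. \<exists>r\<in>R. x - r \<in> MP m)"
proof (induction m)
  case 0
  show ?case by (intro exI[of _ "{0}"]) (auto simp: O_MP0 MP0)
next
  case (Suc m)
  then obtain R where R: "finite R" "R \<subseteq> VR" "\<forall>x\<in>VR. \<exists>r\<in>R. x - r \<in> MP m" by blast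
  obtain R1 where R1: "finite R1" "R1 \<subseteq> VR" "\<forall>x\<in>VR. \<exists>r\<in>R1. x - r \<in> MP 1" using res1 by blast
  define R' where "R' = (\<lambda>(r, s). r + pi ^ m * s) ` (R \<times> R1)"
  show ?case
  proof (intro exI conjI ballI)
    show "finite R'" using R R1 by (simp add: R'_def)
    show "R' \<subseteq> VR" using R(2) R1(2) by (auto simp: R'_def intro!: O_add O_mult pi_O simp del: power_int_of_nat intro: O_mult[OF _ pi_O] pow_O)
    fix x assume x: "x \<in> VR"
    obtain r where r: "r \<in> R" "x - r \<in> MP m" using R(3) x by blast
    define y where "y = (x - r) / pi ^ m"
    have pm: "pi ^ m \<noteq> 0" using pi_nz by simp
    have xy: "x - r = pi ^ m * y" using pm by (simp add: y_def)
    have yO: "y \<in> VR"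
    proof (cases "x - r = 0")
      case True thus ?thesis by (simp add: y_def O_iff)
    next
      case False
      have "v (pi ^ m) \<le> v (x - r)" using r False by (simp add: MP_iff)
      thus ?thesis using False pm by (simp add: y_def O_iff vdiv)
    qed
    obtain s where s: "s \<in> R1" "y - s \<in> MP 1" using R1(3) yO by blast
    have "x - (r + pi ^ m * s) = pi ^ m * (y - s)" using xy by (simp add: algebra_simps)
    also have "\<dots> \<in> MP (m + 1)" using MP_mult[OF pi_pow_MP s(2)] .
    finally show "\<exists>r\<in>R'. x - r \<in> MP (Suc m)" using r s by (auto simp: R'_def)
  qed
qed

end


context fqz begin

lemma nsmul_nonneg: "0 \<le> (g::'g) \<Longrightarrow> 0 \<le> nsmul n g"
  by (induction n) (auto simp: nsmul_Suc)
lemma nsmul_nonpos: "(g::'g) \<le> 0 \<Longrightarrow> nsmul n g \<le> 0"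
  by (induction n) (auto simp: nsmul_Suc add_nonpos_nonpos)
lemma nsmul_pos: "0 < (g::'g) \<Longrightarrow> 0 < n \<Longrightarrow> 0 < nsmul n g"
proof (induction n)
  case 0 thus ?case by simp
next
  case (Suc n) thus ?case using nsmul_nonneg[of g n] by (simp add: nsmul_Suc add_pos_nonneg)
qed
lemma nsmul_neg: "(g::'g) < 0 \<Longrightarrow> 0 < n \<Longrightarrow> nsmul n g < 0"
proof (induction n)
  case 0 thus ?case by simp
next
  case (Suc n) thus ?case using nsmul_nonpos[of g n] by (simp add: nsmul_Suc add_neg_nonpos)
qed
lemma nsmul_zero: "nsmul n (g::'g) = 0 \<Longrightarrow> 0 < n \<Longrightarrow> g = 0"
  using nsmul_pos[of g n] nsmul_neg[of g n] by (cases "g < 0"; cases "0 < g") auto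

abbreviation cg where "cg m a b \<equiv> a - b \<in> MP m"

lemma cg_refl: "cg m a a" by (simp add: MP0)
lemma cg_sym: "cg m a b \<Longrightarrow> cg m b a" using MP_neg[of "a - b" m] by simp
lemma cg_trans: "cg m a b \<Longrightarrow> cg m b c \<Longrightarrow> cg m a c" using MP_add[of "a - b" m "b - c"] by simp
lemma cg_mult: assumes "cg m a a'" "cg m b b'" "a \<in> VR" "b' \<in> VR" shows "cg m (a * b) (a' * b')"
proof -
  have "a * b - a' * b' = a * (b - b') + (a - a') * b'" by (simp add: algebra_simps)
  thus ?thesis using MP_add[OF MP_multO'[OF assms(3) assms(2)] MP_multO[OF assms(1) assms(4)]] by simp
qed

lemma cg_pow_mult: assumes "w \<in> VR" "cg m (w ^ a) 1" shows "cg m (w ^ (a * t)) 1"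
proof (induction t)
  case 0 thus ?case by (simp add: MP0)
next
  case (Suc t)
  have "w ^ (a * Suc t) = w ^ a * w ^ (a * t)" by (simp add: power_add)
  moreover have "cg m (w ^ a * w ^ (a * t)) (1 * 1)"
    using cg_mult[OF assms(2) Suc.IH pow_O[OF assms(1)] O_1] .
  ultimately show ?case by simp
qed

definition expo :: "nat \<Rightarrow> nat \<Rightarrow> bool" where
  "expo m E \<longleftrightarrow> 0 < E \<and> (\<forall>w. unit w \<longrightarrow> cg m (w ^ E) 1)"

lemma exponent: "\<exists>E. expo m E"
proof -
  obtain R where R: "finite R" "R \<subseteq> VR" "\<forall>x\<in>VR. \<exists>r\<in>R. x - r \<in> MP m" using resm[of m] by (elim exE conjE) simp
  have "\<forall>w. unit w \<longrightarrow> cg m (w ^ fact (card R)) 1"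
  proof (intro allI impI)
    fix w assume w: "unit w"
    define \<rho> where "\<rho> i = (SOME r. r \<in> R \<and> w ^ i - r \<in> MP m)" for i :: nat
    have \<rho>: "\<rho> i \<in> R \<and> w ^ i - \<rho> i \<in> MP m" for i
    proof -
      have "w ^ i \<in> VR" using pow_O[OF unit_O[OF w]] .
      then have "\<exists>r. r \<in> R \<and> w ^ i - r \<in> MP m" using R(3) by blast
      thus ?thesis unfolding \<rho>_def by (rule someI_ex)
    qed
    have "\<not> inj_on \<rho> {0..card R}"
    proof
      assume "inj_on \<rho> {0..card R}"
      moreover have "\<rho> ` {0..card R} \<subseteq> R" using \<rho> by auto
      ultimately have "card {0..card R} \<le> card R" using card_inj_on_le R(1) by metis
      thus False by simp
    qed
    then obtain i j where ij: "i \<in> {0..card R}" "j \<in> {0..card R}" "i \<noteq> j" "\<rho> i = \<rho> j"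
      unfolding inj_on_def by blast
    have "\<exists>i j. i < j \<and> j \<le> card R \<and> \<rho> i = \<rho> j"
    proof (cases "i < j")
      case True thus ?thesis using ij by auto
    next
      case False thus ?thesis using ij by (intro exI[of _ j] exI[of _ i]) auto
    qed
    then obtain i j where ij: "i < j" "j \<le> card R" "\<rho> i = \<rho> j" by blast
    have d: "w ^ i - w ^ j \<in> MP m" using MP_sub[OF conjunct2[OF \<rho>[of i]] conjunct2[OF \<rho>[of j]]] ij(3) by simp
    define a where "a = j - i"
    have wj: "w ^ j = w ^ i * w ^ a" using ij(1) by (simp add: a_def flip: power_add)
    have "w ^ i * (1 - w ^ a) \<in> MP m" using d wj by (simp add: algebra_simps)
    hence "1 - w ^ a \<in> MP m" by (rule MP_unit_cancel[OF unit_pow[OF w]])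
    hence wa: "cg m (w ^ a) 1" using cg_sym by blast
    have "a dvd fact (card R)" using ij by (simp add: a_def dvd_fact)
    then obtain t where t: "fact (card R) = a * t" by (auto elim: dvdE)
    show "cg m (w ^ fact (card R)) 1" unfolding t by (rule cg_pow_mult[OF unit_O[OF w] wa])
  qed
  thus ?thesis unfolding expo_def by (intro exI[of _ "fact (card R)"]) simp
qed

lemma zg_e: obtains e0 where "e0 = v pi" "\<forall>n>0. \<forall>g. \<exists>h r. r < n \<and> g = nsmul n h + nsmul r e0"
proof -
  have "Z_group TYPE('g)" using fqz by (simp add: FqZ_field_def)
  then obtain e0 :: 'g where e: "0 < e0" "\<forall>g. 0 < g \<longrightarrow> e0 \<le> g"
      "\<forall>n>0. \<forall>g. \<exists>h r. r < n \<and> g = nsmul n h + nsmul r e0"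
    unfolding Z_group_def by blast
  have "e0 = v pi" using e(1,2) pi_pos disc[of e0] by (meson antisym)
  thus ?thesis using e(3) that by blast
qed

lemma zdec: "0 < E \<Longrightarrow> \<exists>h r. r < E \<and> g = nsmul E h + nsmul r (v pi)"
  using zg_e by metis

lemma edec: assumes "x \<noteq> 0" "0 < E" shows "\<exists>r y u. r < E \<and> y \<noteq> 0 \<and> unit u \<and> x = pi ^ r * y ^ E * u"
proof -
  obtain h r where hr: "r < E" "v x = nsmul E h + nsmul r (v pi)" using zdec[OF assms(2)] by blast
  obtain y where y: "y \<noteq> 0" "v y = h" using vsurj by blast
  define u where "u = x / (pi ^ r * y ^ E)"
  have nz: "pi ^ r * y ^ E \<noteq> 0" using pi_nz y by simp
  have "v u = 0" using hr y nz assms pi_nz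
    by (simp add: u_def vdiv vmult vpow add.commute)
  moreover have "u \<noteq> 0" using assms nz by (simp add: u_def)
  moreover have "x = pi ^ r * y ^ E * u" using nz by (simp add: u_def)
  ultimately show ?thesis using hr y by (auto simp: unit_def)
qed

lemma powi_mult_nat: "(x::'k) powi (int n * s) = (x powi s) ^ n"
  by (simp add: mult.commute[of "int n"] power_int_mult)

lemma gamma_dvd: assumes "y \<noteq> 0" "0 < E" "v (pi powi a * y ^ E) = 0" shows "int E dvd a"
proof (rule ccontr)
  assume nd: "\<not> int E dvd a"
  define r where "r = a mod int E"
  define q' where "q' = a div int E"
  have r0: "r \<noteq> 0" using nd by (simp add: r_def dvd_eq_mod_eq_0)
  have r1: "0 \<le> r" "r < int E" using assms(2) by (simp_all add: r_def)
  have r: "0 < r" "r < int E" using r0 r1 by linarith+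
  define z where "z = pi powi q' * y"
  have znz: "z \<noteq> 0" using pi_nz assms(1) by (simp add: z_def)
  have a: "a = r + int E * q'" by (simp add: r_def q'_def)
  have "pi powi a = pi powi r * pi powi (int E * q')"
    unfolding a by (rule power_int_add) (use pi_nz in simp)
  also have "pi powi (int E * q') = (pi powi q') ^ E"
    by (simp add: mult.commute[of "int E"] power_int_mult)
  finally have "pi powi a * y ^ E = pi powi r * z ^ E" by (simp add: z_def power_mult_distrib)
  hence eq: "v (pi powi r * z ^ E) = 0" using assms(3) by simp
  have vr: "0 < v (pi powi r)" using vpowi_mono[of 0 r] r vpowi_0 by simp
  have pr: "pi powi r \<noteq> 0" using pi_nz by simp
  have s: "v (pi powi r) + nsmul E (v z) = 0" using eq vmult[OF pr] znz vpow[OF znz] by simp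
  have vz: "v z < 0"
  proof (rule ccontr)
    assume "\<not> v z < 0"
    hence "0 \<le> nsmul E (v z)" using nsmul_nonneg by simp
    from add_pos_nonneg[OF vr this] s show False by simp
  qed
  have "v pi \<le> - v z" using disc[of "- v z"] vz by simp
  hence "v z + v pi \<le> v z + - v z" by (rule add_left_mono)
  hence vzp: "v (z * pi) \<le> 0" using vmult[OF znz pi_nz] by simp
  have zpnz: "z * pi \<noteq> 0" using znz pi_nz by simp
  have pE: "pi powi (- int E) \<noteq> 0" using pi_nz by simp
  have "z ^ E = (z * pi) ^ E * pi powi (- int E)" using pi_nz
    by (simp add: power_mult_distrib power_int_minus)
  hence "v (z ^ E) = v ((z * pi) ^ E) + v (pi powi (- int E))"
    using vmult[OF _ pE, of "(z * pi) ^ E"] zpnz by simp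
  hence "nsmul E (v z) = nsmul E (v (z * pi)) + v (pi powi (- int E))"
    using vpow[OF znz] vpow[OF zpnz] by simp
  hence "(v (pi powi r) + v (pi powi (- int E))) + nsmul E (v (z * pi)) = 0" using s by (simp add: ac_simps)
  hence "v (pi powi r) + v (pi powi (- int E)) = - nsmul E (v (z * pi))" by (simp add: eq_neg_iff_add_eq_0)
  hence "0 \<le> v (pi powi r) + v (pi powi (- int E))" using nsmul_nonpos[OF vzp, of E] by simp
  also have "\<dots> = v (pi powi (r - int E))" using vpowi[OF pi_nz, of r "- int E"] by simp
  also have "\<dots> < v (pi powi 0)" using vpowi_mono[of "r - int E" 0] r by simp
  finally show False using vpowi_0 by simp
qed

lemma Lstar: assumes E: "expo m E" and u: "unit u" "unit u'" and y: "y \<noteq> 0" "y' \<noteq> 0"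
  and eq: "pi ^ r * y ^ E * u = pi ^ r' * y' ^ E * u'"
  shows "cg m u u'"
proof -
  have E0: "0 < E" using E by (simp add: expo_def)
  have nz: "u \<noteq> 0" "u' \<noteq> 0" using u by (auto simp: unit_def)
  have pz: "pi ^ r * y ^ E \<noteq> 0" "pi ^ r' * y' ^ E \<noteq> 0" using pi_nz y by auto
  have e2: "u * (pi ^ r * y ^ E) = u' * (pi ^ r' * y' ^ E)" using eq by (simp add: ac_simps)
  have "u / u' = (pi ^ r' * y' ^ E) / (pi ^ r * y ^ E)"
    using e2 nz pz by (simp add: frac_eq_eq ac_simps)
  also have "\<dots> = (pi ^ r' / pi ^ r) * (y' / y) ^ E" by (simp add: power_divide)
  also have "pi ^ r' / pi ^ r = pi powi (int r' - int r)" using pi_nz by (simp add: power_int_diff)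
  finally have q: "u / u' = pi powi (int r' - int r) * (y' / y) ^ E" .
  have "v (u / u') = 0" using u nz by (simp add: vdiv unit_def)
  hence "int E dvd (int r' - int r)" using gamma_dvd[of "y' / y" E] q y E0 by simp
  then obtain s where s: "int r' - int r = int E * s" by (auto elim: dvdE)
  define w where "w = pi powi s * (y' / y)"
  have q2: "u / u' = w ^ E" unfolding q s w_def powi_mult_nat by (simp only: power_mult_distrib)
  have wnz: "w \<noteq> 0" using pi_nz y by (simp add: w_def)
  have "nsmul E (v w) = 0" using q2 \<open>v (u / u') = 0\<close> vpow[OF wnz] by simp
  hence "unit w" using nsmul_zero E0 wnz by (auto simp: unit_def)
  hence "cg m (u / u') 1" using E q2 by (simp add: expo_def)
  hence "u' * (u / u' - 1) \<in> MP m" using MP_multO'[OF unit_O[OF u(2)]] by blast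
  thus ?thesis using nz by (simp add: algebra_simps)
qed

definition decs :: "nat \<Rightarrow> 'k \<Rightarrow> 'k \<Rightarrow> bool" where
  "decs E x u \<longleftrightarrow> (\<exists>r y. y \<noteq> 0 \<and> unit u \<and> x = pi ^ r * y ^ E * u)"

definition fE :: "nat \<Rightarrow> 'k \<Rightarrow> 'k" where
  "fE E x = (if x = 0 then 1 else SOME u. decs E x u)"

lemma fE_decs: assumes "x \<noteq> 0" "0 < E" shows "decs E x (fE E x)"
proof -
  have "\<exists>u. decs E x u" using edec[OF assms] by (auto simp: decs_def)
  thus ?thesis using assms(1) by (simp add: fE_def someI_ex)
qed

lemma decs_cg: assumes "expo m E" "decs E x u" "decs E x u'" shows "cg m u u'"
  using assms(2,3) Lstar[OF assms(1)] unfolding decs_def by metis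

lemma fE_rep: assumes E: "expo m E" shows "is_ac_rep v pi m (fE E)"
proof -
  have E0: "0 < E" using E by (simp add: expo_def)
  have d: "\<And>x. x \<noteq> 0 \<Longrightarrow> decs E x (fE E x)" using fE_decs E0 by blast
  have un: "\<And>x. x \<noteq> 0 \<Longrightarrow> unit (fE E x)" using d by (auto simp: decs_def)
  have 1: "\<forall>x. x \<noteq> 0 \<longrightarrow> fE E x \<noteq> 0 \<and> v (fE E x) = 0" using un by (auto simp: unit_def)
  have 2: "\<forall>x y. x \<noteq> 0 \<longrightarrow> y \<noteq> 0 \<longrightarrow> cg m (fE E (x * y)) (fE E x * fE E y)"
  proof (intro allI impI)
    fix x y :: 'k assume xy: "x \<noteq> 0" "y \<noteq> 0"
    obtain r1 y1 where 1: "y1 \<noteq> 0" "x = pi ^ r1 * y1 ^ E * fE E x" using d[OF xy(1)] by (auto simp: decs_def)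
    obtain r2 y2 where 2: "y2 \<noteq> 0" "y = pi ^ r2 * y2 ^ E * fE E y" using d[OF xy(2)] by (auto simp: decs_def)
    have "x * y = (pi ^ r1 * y1 ^ E * fE E x) * (pi ^ r2 * y2 ^ E * fE E y)"
      by (rule arg_cong2[OF 1(2) 2(2)])
    also have "\<dots> = pi ^ (r1 + r2) * (y1 * y2) ^ E * (fE E x * fE E y)"
      by (simp add: power_add power_mult_distrib ac_simps)
    finally have "x * y = pi ^ (r1 + r2) * (y1 * y2) ^ E * (fE E x * fE E y)" .
    hence "decs E (x * y) (fE E x * fE E y)" unfolding decs_def
      using 1(1) 2(1) unit_mult[OF un[OF xy(1)] un[OF xy(2)]]
      by (intro exI[of _ "r1 + r2"] exI[of _ "y1 * y2"]) simp
    thus "cg m (fE E (x * y)) (fE E x * fE E y)" using decs_cg[OF E d] xy by simp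
  qed
  have 3: "cg m (fE E pi) 1"
  proof -
    have "decs E pi 1" using unit_1 by (auto simp: decs_def intro!: exI[of _ 1])
    thus ?thesis using decs_cg[OF E d[OF pi_nz]] by simp
  qed
  have 4: "\<forall>u. u \<noteq> 0 \<longrightarrow> v u = 0 \<longrightarrow> cg m (fE E u) u"
  proof (intro allI impI)
    fix u :: 'k assume u: "u \<noteq> 0" "v u = 0"
    have "decs E u u" unfolding decs_def unit_def
      by (rule exI[of _ "0::nat"], rule exI[of _ "1::'k"]) (use u in simp)
    thus "cg m (fE E u) u" using decs_cg[OF E d[OF u(1)]] by simp
  qed
  show ?thesis using 1 2 3 4 by (simp add: is_ac_rep_def)
qed

lemma rep_unit: "is_ac_rep v pi m f \<Longrightarrow> x \<noteq> 0 \<Longrightarrow> unit (f x)"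
  by (simp add: is_ac_rep_def unit_def)

lemma rep_mult: "is_ac_rep v pi m f \<Longrightarrow> x \<noteq> 0 \<Longrightarrow> y \<noteq> 0 \<Longrightarrow> cg m (f (x * y)) (f x * f y)"
  by (simp add: is_ac_rep_def)

lemma rep_pow: assumes f: "is_ac_rep v pi m f" and x: "x \<noteq> 0" and n: "0 < n"
  shows "cg m (f (x ^ n)) (f x ^ n)"
  using n
proof (induction n)
  case 0 thus ?case by simp
next
  case (Suc n)
  show ?case
  proof (cases "n = 0")
    case True thus ?thesis by (simp add: MP0)
  next
    case False
    have a: "cg m (f (x * x ^ n)) (f x * f (x ^ n))" using rep_mult[OF f x] x by simp
    have b: "cg m (f x * f (x ^ n)) (f x * f x ^ n)"
      using cg_mult[OF cg_refl Suc.IH] False unit_O[OF rep_unit[OF f x]] pow_O[OF unit_O[OF rep_unit[OF f x]]] by simp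
    show ?thesis using cg_trans[OF a b] by simp
  qed
qed

lemma rep_decomp: assumes f: "is_ac_rep v pi m f" and E: "expo m E" and y: "y \<noteq> 0" and u: "unit u"
  shows "cg m (f (pi ^ r * y ^ E * u)) u"
proof -
  have E0: "0 < E" using E by (simp add: expo_def)
  have un: "\<And>x. x \<noteq> 0 \<Longrightarrow> f x \<in> VR" using unit_O rep_unit[OF f] by blast
  have unz: "u \<noteq> 0" using u by (simp add: unit_def)
  have fpi: "cg m (f pi) 1" using f by (simp add: is_ac_rep_def)
  have pr: "cg m (f (pi ^ r)) 1"
  proof (cases "r = 0")
    case True
    have "cg m (f 1) 1" using f unit_1 by (simp add: is_ac_rep_def unit_def)
    thus ?thesis using True by simp
  next
    case False
    have "cg m (f pi ^ r) 1"
    proof (induction r)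
      case 0 thus ?case by (simp add: MP0)
    next
      case (Suc r) thus ?case using cg_mult[OF fpi Suc.IH un[OF pi_nz] O_1] by simp
    qed
    thus ?thesis using cg_trans[OF rep_pow[OF f pi_nz] ] False by simp
  qed
  have fy: "cg m (f (y ^ E)) 1"
    using cg_trans[OF rep_pow[OF f y E0]] E rep_unit[OF f y] by (simp add: expo_def)
  have nz1: "pi ^ r \<noteq> 0" "y ^ E \<noteq> 0" using pi_nz y by auto
  have a: "cg m (f (pi ^ r * y ^ E * u)) (f (pi ^ r * y ^ E) * f u)"
    using rep_mult[OF f] nz1 unz by simp
  have b: "cg m (f (pi ^ r * y ^ E)) (1 * 1)"
    using cg_trans[OF rep_mult[OF f nz1] cg_mult[OF pr fy un O_1]] nz1 by simp
  have c: "cg m (f u) u" using f u by (simp add: is_ac_rep_def unit_def)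
  have "cg m (f (pi ^ r * y ^ E) * f u) (1 * u)"
    using cg_mult[OF b c] un nz1 unz unit_O[OF u] by (simp add: mult_eq_0_iff)
  thus ?thesis using cg_trans[OF a] by simp
qed

lemma rep_unique: assumes f: "is_ac_rep v pi m f" and g: "is_ac_rep v pi m g" and x: "x \<noteq> 0"
  shows "cg m (f x) (g x)"
proof -
  obtain E where E: "expo m E" using exponent by blast
  obtain r y u where d: "y \<noteq> 0" "unit u" "x = pi ^ r * y ^ E * u"
    using edec[OF x, of E] E by (auto simp: expo_def)
  show ?thesis using cg_trans[OF rep_decomp[OF f E d(1,2)] cg_sym[OF rep_decomp[OF g E d(1,2)]]] d(3) by simp
qed

lemma cls_eq: "a \<in> VR \<Longrightarrow> b \<in> VR \<Longrightarrow> cls v pi m a = cls v pi m b \<longleftrightarrow> cg m a b"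
proof
  assume a: "a \<in> VR" "b \<in> VR" "cls v pi m a = cls v pi m b"
  have "a \<in> cls v pi m a" using a(1) MP0 by (simp add: cls_def)
  hence "a \<in> cls v pi m b" using a(3) by simp
  thus "cg m a b" by (simp add: cls_def)
next
  assume a: "a \<in> VR" "b \<in> VR" "cg m a b"
  show "cls v pi m a = cls v pi m b"
    unfolding cls_def using a cg_trans cg_sym by blast
qed

lemma ac_char: "\<exists>f. is_ac_rep v pi m f \<and> ac v pi m 0 = {} \<and> (\<forall>x. x \<noteq> 0 \<longrightarrow> ac v pi m x = cls v pi m (f x))"
proof -
  obtain E where E: "expo m E" using exponent by blast
  define f0 where "f0 = fE E"
  have f0: "is_ac_rep v pi m f0" using fE_rep[OF E] by (simp add: f0_def)
  define h0 where "h0 x = (if x = 0 then {} else cls v pi m (f0 x))" for x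
  let ?P = "\<lambda>h. h 0 = {} \<and> (\<exists>f. is_ac_rep v pi m f \<and> (\<forall>x. x \<noteq> 0 \<longrightarrow> h x = cls v pi m (f x)))"
  have P0: "?P h0" using f0 by (auto simp: h0_def)
  have un: "\<And>h. ?P h \<Longrightarrow> h = h0"
  proof
    fix h x assume Ph: "?P h"
    then obtain g where g: "is_ac_rep v pi m g" "\<forall>x. x \<noteq> 0 \<longrightarrow> h x = cls v pi m (g x)" by blast
    show "h x = h0 x"
    proof (cases "x = 0")
      case True thus ?thesis using Ph by (simp add: h0_def)
    next
      case False
      have "cls v pi m (g x) = cls v pi m (f0 x)"
        using cls_eq[OF unit_O[OF rep_unit[OF g(1) False]] unit_O[OF rep_unit[OF f0 False]]]
          rep_unique[OF g(1) f0 False] by simp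
      thus ?thesis using g False by (simp add: h0_def)
    qed
  qed
  have "ac v pi m = h0" unfolding ac_def using the_equality[of ?P h0] P0 un by blast
  thus ?thesis using f0 by (auto simp: h0_def)
qed

end


context fqz begin

definition acf :: "nat \<Rightarrow> 'k \<Rightarrow> 'k" where
  "acf m = (SOME f. is_ac_rep v pi m f \<and> ac v pi m 0 = {} \<and> (\<forall>x. x \<noteq> 0 \<longrightarrow> ac v pi m x = cls v pi m (f x)))"

lemma acf: "is_ac_rep v pi m (acf m) \<and> ac v pi m 0 = {} \<and> (\<forall>x. x \<noteq> 0 \<longrightarrow> ac v pi m x = cls v pi m (acf m x))"
  unfolding acf_def by (rule someI_ex[OF ac_char])

lemma acf_rep: "is_ac_rep v pi m (acf m)" using acf by (rule conjunct1)

abbreviation Q where "Q n m \<equiv> Qnm v pi n m"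

lemma Q_iff: "x \<in> Q n m \<longleftrightarrow> x \<in> PnM v pi n m \<and> x \<noteq> 0 \<and> cg m (acf m x) 1"
proof (cases "x = 0")
  case True
  have "1 \<in> cls v pi m 1" using O_1 MP0 by (simp add: cls_def)
  hence "ac v pi m x \<noteq> cls v pi m 1" using acf True by auto
  thus ?thesis using True by (simp add: Qnm_def)
next
  case False
  have "ac v pi m x = cls v pi m (acf m x)" using conjunct2[OF conjunct2[OF acf]] False by simp
  moreover have "acf m x \<in> VR" by (rule unit_O[OF rep_unit[OF acf_rep False]])
  ultimately show ?thesis using False cls_eq[OF _ O_1] by (simp add: Qnm_def)
qed

lemma rep_val: "is_ac_rep v pi m f \<Longrightarrow> unit u \<Longrightarrow> cg m (f u) u"
  by (simp add: is_ac_rep_def unit_def)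

lemma rep_mono: "is_ac_rep v pi M f \<Longrightarrow> m \<le> M \<Longrightarrow> is_ac_rep v pi m f"
  unfolding is_ac_rep_def using MP_mono by blast

lemma PnM_iff: "x \<in> PnM v pi n m \<longleftrightarrow> (\<exists>y z. y \<noteq> 0 \<and> z \<in> MP m \<and> x = y ^ n * (1 + z))"
  by (auto simp: PnM_def)

lemma PnM_I: "y \<noteq> 0 \<Longrightarrow> z \<in> MP m \<Longrightarrow> x = y ^ n * (1 + z) \<Longrightarrow> x \<in> PnM v pi n m"
  unfolding PnM_iff by blast

lemma one_plus_unit: assumes "z \<in> MP m" "0 < m" shows "unit (1 + z)"
proof (cases "z = 0")
  case True thus ?thesis by (simp add: unit_1)
next
  case False
  have "z \<in> MP 1" using assms MP_mono[of 1 m z] by simp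
  hence "0 < v z" using False by (metis MP1_iff)
  hence "1 + z \<noteq> 0 \<and> v (1 + z) = v 1" using vadd_strict[of 1 z] v1 by simp
  thus ?thesis using v1 by (simp add: unit_def)
qed

lemma Q_1plus: assumes "z \<in> MP m" "0 < m" shows "1 + z \<in> Q n m"
proof -
  have u: "unit (1 + z)" by (rule one_plus_unit[OF assms])
  have "1 + z \<in> PnM v pi n m" unfolding PnM_iff by (rule exI[of _ 1], rule exI[of _ z]) (use assms in simp)
  moreover have "cg m (acf m (1 + z)) (1 + z)" using rep_val[OF acf_rep u] .
  moreover have "cg m (1 + z) 1" using assms by simp
  ultimately show ?thesis using u cg_trans by (auto simp: Q_iff unit_def)
qed

lemma Q_one: "0 < m \<Longrightarrow> 1 \<in> Q n m" using Q_1plus[of 0 m n] MP0 by simp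

lemma Q_nz: "x \<in> Q n m \<Longrightarrow> x \<noteq> 0" by (simp add: Q_iff)

lemma Q_mult: assumes "x \<in> Q n m" "y \<in> Q n m" "0 < m" shows "x * y \<in> Q n m"
proof -
  obtain a z where az: "a \<noteq> 0" "z \<in> MP m" "x = a ^ n * (1 + z)" using assms(1) by (auto simp: Q_iff PnM_iff)
  obtain b w where bw: "b \<noteq> 0" "w \<in> MP m" "y = b ^ n * (1 + w)" using assms(2) by (auto simp: Q_iff PnM_iff)
  have "x * y = (a * b) ^ n * (1 + (z + w + z * w))"
    unfolding az(3) bw(3) by (simp add: power_mult_distrib algebra_simps)
  moreover have "z + w + z * w \<in> MP m"
    using MP_add[OF MP_add[OF az(2) bw(2)] MP_multO[OF az(2) MP_O[OF bw(2)]]] .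
  ultimately have p: "x * y \<in> PnM v pi n m" using az bw by (intro PnM_I[of "a * b" "z + w + z * w"]) simp_all
  have nz: "x \<noteq> 0" "y \<noteq> 0" using assms by (auto simp: Q_iff)
  have "cg m (acf m (x * y)) (acf m x * acf m y)" using rep_mult[OF acf_rep nz] .
  moreover have "cg m (acf m x * acf m y) (1 * 1)"
    using cg_mult[OF _ _ unit_O[OF rep_unit[OF acf_rep nz(1)]] O_1] assms
    by (simp add: Q_iff)
  ultimately show ?thesis using p nz cg_trans by (auto simp: Q_iff)
qed

lemma Q_inv: assumes "x \<in> Q n m" "0 < m" shows "inverse x \<in> Q n m"
proof -
  obtain a z where az: "a \<noteq> 0" "z \<in> MP m" "x = a ^ n * (1 + z)" using assms(1) by (auto simp: Q_iff PnM_iff)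
  have u: "unit (1 + z)" using one_plus_unit[OF az(2) assms(2)] .
  have z1: "1 + z \<noteq> 0" using u by (simp add: unit_def)
  define w where "w = - z / (1 + z)"
  have w: "inverse (1 + z) = 1 + w" using z1 by (simp add: w_def field_simps)
  have "- z * inverse (1 + z) \<in> MP m" using MP_multO[OF MP_neg[OF az(2)] unit_O[OF unit_inv[OF u]]] .
  hence wm: "w \<in> MP m" by (simp add: w_def divide_inverse)
  have "inverse x = (inverse a) ^ n * (1 + w)" using az(3) w by (simp add: power_inverse)
  hence p: "inverse x \<in> PnM v pi n m" using wm az(1) by (intro PnM_I[of "inverse a" w]) simp_all
  have nz: "x \<noteq> 0" using assms by (simp add: Q_iff)
  have ix: "inverse x \<noteq> 0" using nz by simp
  have c0: "cg m (acf m (x * inverse x)) (acf m x * acf m (inverse x))" by (rule rep_mult[OF acf_rep nz ix])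
  have "x * inverse x = 1" using nz by simp
  hence c1: "cg m (acf m 1) (acf m x * acf m (inverse x))" using c0 by metis
  have "cg m (acf m 1) 1" using rep_val[OF acf_rep unit_1] .
  hence c2: "cg m (acf m x * acf m (inverse x)) 1" using cg_trans[OF cg_sym[OF c1]] by simp
  have c3: "cg m (acf m x * acf m (inverse x)) (1 * acf m (inverse x))"
  proof (rule cg_mult[OF _ cg_refl])
    show "cg m (acf m x) 1" using assms(1) by (simp add: Q_iff)
    show "acf m x \<in> VR" by (rule unit_O[OF rep_unit[OF acf_rep nz]])
    show "acf m (inverse x) \<in> VR" by (rule unit_O[OF rep_unit[OF acf_rep ix]])
  qed
  have "cg m (acf m (inverse x)) 1" using cg_trans[OF cg_sym[OF c3] c2] by simp
  thus ?thesis using p nz by (simp add: Q_iff)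
qed

lemma Q_div: "x \<in> Q n m \<Longrightarrow> y \<in> Q n m \<Longrightarrow> 0 < m \<Longrightarrow> x / y \<in> Q n m"
  using Q_mult[OF _ Q_inv] by (simp add: divide_inverse)

lemma Q_sub: assumes "n dvd N" "m \<le> M" "0 < m" "x \<in> Q N M" shows "x \<in> Q n m"
proof -
  obtain a z where az: "a \<noteq> 0" "z \<in> MP M" "x = a ^ N * (1 + z)" using assms(4) by (auto simp: Q_iff PnM_iff)
  obtain k where k: "N = n * k" using assms(1) by (auto elim: dvdE)
  have "x = (a ^ k) ^ n * (1 + z)" using az(3) k by (simp add: power_mult[symmetric] mult.commute)
  hence p: "x \<in> PnM v pi n m" using az MP_mono[OF assms(2)] by (intro PnM_I[of "a ^ k" z]) simp_all
  have nz: "x \<noteq> 0" using assms(4) by (simp add: Q_iff)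
  have "cg m (acf m x) (acf M x)" using rep_unique[OF acf_rep rep_mono[OF acf_rep assms(2)] nz] .
  moreover have "cg m (acf M x) 1" using assms(4) MP_mono[OF assms(2)] by (simp add: Q_iff)
  ultimately show ?thesis using p nz cg_trans by (auto simp: Q_iff)
qed

lemma Q_same_val: assumes "x \<in> Q N M" "y \<in> Q N M" "v x = v y" "0 < M" shows "cg M (x / y) 1"
proof -
  have q: "x / y \<in> Q N M" using Q_div[OF assms(1) assms(2) assms(4)] .
  have nz: "x \<noteq> 0" "y \<noteq> 0" using assms by (auto simp: Q_iff)
  have u: "unit (x / y)" using nz assms(3) by (simp add: unit_def vdiv)
  show ?thesis using cg_trans[OF cg_sym[OF rep_val[OF acf_rep u]]] q by (simp add: Q_iff)
qed

end


context fqz begin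

lemma rep_mult_cg: assumes f: "is_ac_rep v pi m f" and ab: "a \<noteq> 0" "b \<noteq> 0"
  and A: "cg m (f a) A" and B: "cg m (f b) B" "B \<in> VR"
  shows "cg m (f (a * b)) (A * B)"
  using cg_trans[OF rep_mult[OF f ab] cg_mult[OF A B(1) unit_O[OF rep_unit[OF f ab(1)]] B(2)]] .

lemma cg_pow1: "w \<in> VR \<Longrightarrow> cg m w 1 \<Longrightarrow> cg m (w ^ t) 1"
  using cg_pow_mult[where a=1 and t=t and w=w and m=m] by simp

lemma rep_pi_pow: assumes f: "is_ac_rep v pi m f" shows "cg m (f (pi ^ r)) 1"
proof (induction r)
  case 0 thus ?case using rep_val[OF f unit_1] by simp
next
  case (Suc r)
  have "cg m (f (pi * pi ^ r)) (1 * 1)"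
    using rep_mult_cg[OF f pi_nz _ _ Suc.IH O_1] f pi_nz by (simp add: is_ac_rep_def)
  thus ?case by simp
qed

lemma unit_cg: assumes "unit a" "cg m a b" "0 < m" shows "unit b"
proof -
  have b: "b = a + (b - a)" by simp
  show ?thesis
  proof (cases "b - a = 0")
    case True thus ?thesis using assms(1) by simp
  next
    case False
    have "b - a \<in> MP m" using MP_neg[OF assms(2)] by simp
    hence "b - a \<in> MP 1" using MP_mono[of 1 m] assms(3) by simp
    hence "0 < v (b - a)" using False by (metis MP1_iff)
    hence "a + (b - a) \<noteq> 0 \<and> v (a + (b - a)) = v a" using vadd_strict[of a "b - a"] assms(1) by (simp add: unit_def)
    thus ?thesis using assms(1) by (simp add: unit_def)
  qed
qed

lemma cg_cancel: assumes "unit u" "cg m (u * c) u" shows "cg m c 1"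
proof -
  have "u * (c - 1) \<in> MP m" using assms(2) by (simp add: algebra_simps)
  thus ?thesis by (rule MP_unit_cancel[OF assms(1)])
qed

lemma fin_index: assumes N: "0 < N" and M: "0 < M"
  shows "\<exists>S. finite S \<and> 0 \<notin> S \<and> (\<forall>x. x \<noteq> 0 \<longrightarrow> (\<exists>s\<in>S. x / s \<in> Q N M))"
proof -
  obtain R where R: "finite R" "R \<subseteq> VR" "\<forall>x\<in>VR. \<exists>r\<in>R. x - r \<in> MP M"
    using resm[of M] by (elim exE conjE) simp
  define S where "S = (\<lambda>(r, \<rho>). pi ^ r * \<rho>) ` ({..<N} \<times> (R - {0}))"
  let ?f = "acf M"
  have f: "is_ac_rep v pi M ?f" by (rule acf_rep)
  have main: "\<exists>s\<in>S. x / s \<in> Q N M" if x: "x \<noteq> 0" for x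
  proof -
    obtain h r where hr: "r < N" "v x = nsmul N h + nsmul r (v pi)" using zdec[OF N] by blast
    obtain y where y: "y \<noteq> 0" "v y = h" using vsurj by blast
    have ux: "unit (?f x)" by (rule rep_unit[OF f x])
    obtain \<rho> where \<rho>: "\<rho> \<in> R" "?f x - \<rho> \<in> MP M" using R(3) unit_O[OF ux] by blast
    have u\<rho>: "unit \<rho>" using unit_cg[OF ux \<rho>(2) M] .
    have \<rho>nz: "\<rho> \<noteq> 0" using u\<rho> by (simp add: unit_def)
    have uy: "unit (?f y)" by (rule rep_unit[OF f y(1)])
    have fynz: "?f y \<noteq> 0" using uy by (simp add: unit_def)
    define w where "w = y / ?f y"
    have wnz: "w \<noteq> 0" using y fynz by (simp add: w_def)
    have vw: "v w = h" using y uy fynz by (simp add: w_def vdiv unit_def)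
    define s where "s = pi ^ r * \<rho>"
    have snz: "s \<noteq> 0" using pi_nz \<rho>nz by (simp add: s_def)
    define c where "c = x / (s * w ^ N)"
    have swnz: "s * w ^ N \<noteq> 0" using snz wnz by simp
    have cnz: "c \<noteq> 0" using x swnz by (simp add: c_def)
    have "v (s * w ^ N) = nsmul r (v pi) + nsmul N h"
      using pi_nz \<rho>nz wnz u\<rho> vw by (simp add: s_def vmult vpow unit_def)
    hence vc: "v c = 0" using hr(2) x swnz by (simp add: c_def vdiv algebra_simps)
    have uc: "unit c" using cnz vc by (simp add: unit_def)
    have xe: "x = s * w ^ N * c" using swnz by (simp add: c_def)
    have fw: "cg M (?f w) 1"
    proof -
      have fyy: "cg M (?f (?f y)) (?f y)" by (rule rep_val[OF f uy])
      have "cg M (?f (w * ?f y)) (?f w * ?f y)"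
        using rep_mult_cg[OF f wnz fynz cg_refl fyy unit_O[OF uy]] .
      moreover have "w * ?f y = y" using fynz by (simp add: w_def)
      ultimately have "cg M (?f y) (?f w * ?f y)" by simp
      hence "cg M (?f y * ?f w) (?f y)" using cg_sym by (simp add: mult.commute)
      thus ?thesis by (rule cg_cancel[OF uy])
    qed
    have fwN: "cg M (?f (w ^ N)) 1"
      using cg_trans[OF rep_pow[OF f wnz N] cg_pow1[OF unit_O[OF rep_unit[OF f wnz]] fw]] .
    have fs: "cg M (?f s) (1 * \<rho>)"
      unfolding s_def using rep_mult_cg[OF f _ \<rho>nz rep_pi_pow[OF f] rep_val[OF f u\<rho>] unit_O[OF u\<rho>]] pi_nz by simp
    have fsw: "cg M (?f (s * w ^ N)) (\<rho> * 1)"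
      using rep_mult_cg[OF f snz _ _ fwN O_1] fs wnz by simp
    have fx: "cg M (?f x) (\<rho> * c)"
      unfolding xe using rep_mult_cg[OF f swnz cnz fsw rep_val[OF f uc] unit_O[OF uc]] by simp
    have "cg M (\<rho> * c) \<rho>" using cg_trans[OF cg_sym[OF fx] \<rho>(2)] .
    hence c1: "cg M c 1" by (rule cg_cancel[OF u\<rho>])
    have xs: "x / s = w ^ N * c" using xe snz by (simp add: field_simps)
    have "x / s \<in> PnM v pi N M" unfolding xs using wnz c1 by (intro PnM_I[of w "c - 1"]) simp_all
    moreover have "cg M (?f (w ^ N * c)) (1 * c)"
      using rep_mult_cg[OF f _ cnz fwN rep_val[OF f uc] unit_O[OF uc]] wnz by simp
    hence "cg M (?f (x / s)) 1" using cg_trans[OF _ c1] xs by simp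
    moreover have "x / s \<noteq> 0" using x snz by simp
    ultimately have "x / s \<in> Q N M" by (simp add: Q_iff)
    moreover have "s \<in> S" using hr(1) \<rho> \<rho>nz by (auto simp: S_def s_def)
    ultimately show ?thesis by blast
  qed
  have "finite S" using R(1) by (simp add: S_def)
  moreover have "0 \<notin> S" using pi_nz by (auto simp: S_def)
  ultimately show ?thesis using main by blast
qed

end


context fqz begin

abbreviation LQ where "LQ lam n m \<equiv> lamQ v pi lam n m"

lemma LQ_0: "0 < m \<Longrightarrow> LQ 0 n m = {0}"
  using Q_one[of m n] by (auto simp: lamQ_def)

lemma LQ_nz: "lam \<noteq> 0 \<Longrightarrow> y \<in> LQ lam n m \<longleftrightarrow> y / lam \<in> Q n m"
proof
  assume "lam \<noteq> 0" "y \<in> LQ lam n m"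
  then obtain t where "t \<in> Q n m" "y = lam * t" by (auto simp: lamQ_def)
  thus "y / lam \<in> Q n m" using \<open>lam \<noteq> 0\<close> by simp
next
  assume "lam \<noteq> 0" "y / lam \<in> Q n m"
  moreover have "y = lam * (y / lam)" using \<open>lam \<noteq> 0\<close> by simp
  ultimately show "y \<in> LQ lam n m" unfolding lamQ_def by blast
qed

lemma LQ_zero_mem: "0 < m \<Longrightarrow> 0 \<in> LQ lam n m \<longleftrightarrow> lam = 0"
  using LQ_0[of m n] LQ_nz[of lam 0 n m] Q_nz by fastforce

lemma LQ_nzD: "0 < m \<Longrightarrow> y \<in> LQ lam n m \<Longrightarrow> y \<noteq> 0 \<Longrightarrow> lam \<noteq> 0"
  using LQ_0 by auto

lemma LQ_transfer: assumes g: "g \<in> Q n m" and m: "0 < m"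
  shows "y * g \<in> LQ lam n m \<longleftrightarrow> y \<in> LQ lam n m"
proof (cases "lam = 0")
  case True
  have "g \<noteq> 0" using Q_nz[OF g] .
  thus ?thesis using True LQ_0[OF m] by simp
next
  case False
  have gnz: "g \<noteq> 0" using Q_nz[OF g] .
  have "y * g / lam = (y / lam) * g" by simp
  moreover have "y / lam = (y * g / lam) / g" using gnz by simp
  ultimately show ?thesis using False LQ_nz Q_mult[OF _ g m] Q_div[OF _ g m] by metis
qed

lemma LQ_scale: assumes "c \<noteq> 0" shows "c * y \<in> LQ (c * lam) n m \<longleftrightarrow> y \<in> LQ lam n m"
proof (cases "lam = 0")
  case True
  have "c * y \<in> LQ 0 n m \<longleftrightarrow> y \<in> LQ 0 n m"
    using assms by (auto simp: lamQ_def)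
  thus ?thesis using True by simp
next
  case False
  have "c * y / (c * lam) = y / lam" using assms by simp
  thus ?thesis using LQ_nz False assms by simp
qed

lemma LQ_neg: "- y \<in> LQ (- lam) n m \<longleftrightarrow> y \<in> LQ lam n m"
  using LQ_scale[of "-1" y lam n m] by simp

lemma cosets: assumes N: "0 < N" and M: "0 < M"
  shows "\<exists>R. finite R \<and> 0 \<in> R \<and> (\<forall>t. \<exists>\<mu>\<in>R. t \<in> LQ \<mu> N M) \<and>
     (\<forall>\<mu>\<in>R. \<forall>\<mu>'\<in>R. \<mu> \<noteq> \<mu>' \<longrightarrow> LQ \<mu> N M \<inter> LQ \<mu>' N M = {})"
proof -
  obtain S where S: "finite S" "0 \<notin> S" "\<forall>x. x \<noteq> 0 \<longrightarrow> (\<exists>s\<in>S. x / s \<in> Q N M)"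
    using fin_index[OF N M] by (elim exE conjE) simp
  define canon where "canon s = (SOME s'. s' \<in> S \<and> s' / s \<in> Q N M)" for s
  have canon: "canon s \<in> S \<and> canon s / s \<in> Q N M" if "s \<in> S" for s
  proof -
    have "s \<in> S \<and> s / s \<in> Q N M" using that S(2) Q_one[OF M] by (cases "s = 0") auto
    thus ?thesis unfolding canon_def by (rule someI)
  qed
  define R where "R = insert 0 (canon ` S)"
  have cov: "\<exists>\<mu>\<in>R. t \<in> LQ \<mu> N M" for t
  proof (cases "t = 0")
    case True thus ?thesis using LQ_0[OF M] by (auto simp: R_def)
  next
    case False
    then obtain s where s: "s \<in> S" "t / s \<in> Q N M" using S(3) by blast
    have c: "canon s \<in> S" "canon s / s \<in> Q N M" using canon[OF s(1)] by auto
    have cnz: "canon s \<noteq> 0" "s \<noteq> 0" using c(1) s(1) S(2) by auto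
    have e: "t / canon s = (t / s) / (canon s / s)" using cnz by simp
    have "t / canon s \<in> Q N M" unfolding e by (rule Q_div[OF s(2) c(2) M])
    hence "t \<in> LQ (canon s) N M" using LQ_nz cnz by simp
    thus ?thesis using s(1) by (auto simp: R_def)
  qed
  have disj: "LQ \<mu> N M \<inter> LQ \<mu>' N M = {}" if mu: "\<mu> \<in> R" "\<mu>' \<in> R" "\<mu> \<noteq> \<mu>'" for \<mu> \<mu>'
  proof (rule ccontr)
    assume "LQ \<mu> N M \<inter> LQ \<mu>' N M \<noteq> {}"
    then obtain t where t: "t \<in> LQ \<mu> N M" "t \<in> LQ \<mu>' N M" by blast
    have ncase: False if nz0: "\<mu> \<noteq> 0" "\<mu>' \<noteq> 0"
    proof -
      obtain s1 where s1: "s1 \<in> S" "\<mu> = canon s1" using mu(1) nz0(1) by (auto simp: R_def)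
      obtain s2 where s2: "s2 \<in> S" "\<mu>' = canon s2" using mu(2) nz0(2) by (auto simp: R_def)
      have tnz: "t \<noteq> 0" using t(1) nz0(1) LQ_zero_mem[OF M] Q_nz LQ_nz by (metis divide_eq_0_iff)
      have q1: "t / \<mu> \<in> Q N M" "t / \<mu>' \<in> Q N M" using t nz0 LQ_nz by auto
      have c1: "\<mu> / s1 \<in> Q N M" using canon[OF s1(1)] s1(2) by simp
      have c2: "\<mu>' / s2 \<in> Q N M" using canon[OF s2(1)] s2(2) by simp
      have nz: "s1 \<noteq> 0" "s2 \<noteq> 0" using s1 s2 S(2) by auto
      have "s2 / s1 = (\<mu> / s1) * (t / \<mu>) / ((\<mu>' / s2) * (t / \<mu>'))"
        using nz nz0 tnz by (simp add: field_simps)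
      hence q: "s2 / s1 \<in> Q N M"
        using Q_div[OF Q_mult[OF c1 q1(1) M] Q_mult[OF c2 q1(2) M] M] by simp
      have "(\<lambda>s'. s' \<in> S \<and> s' / s1 \<in> Q N M) = (\<lambda>s'. s' \<in> S \<and> s' / s2 \<in> Q N M)"
      proof (rule ext)
        fix s'
        have e1: "s' / s1 = (s' / s2) * (s2 / s1)" using nz by simp
        have e2: "s' / s2 = (s' / s1) / (s2 / s1)" using nz by simp
        show "(s' \<in> S \<and> s' / s1 \<in> Q N M) = (s' \<in> S \<and> s' / s2 \<in> Q N M)"
          using Q_mult[OF _ q M] Q_div[OF _ q M] e1 e2 by metis
      qed
      hence "canon s1 = canon s2" by (simp add: canon_def)
      thus False using s1 s2 mu(3) by simp
    qed
    show False
    proof (cases "\<mu> = 0 \<or> \<mu>' = 0")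
      case True
      hence "t = 0" using t LQ_0[OF M] by auto
      hence "\<mu> = 0 \<and> \<mu>' = 0" using t LQ_zero_mem[OF M] by auto
      thus False using mu(3) by simp
    next
      case False thus False using ncase by blast
    qed
  qed
  show ?thesis using S(1) cov disj by (intro exI[of _ R]) (auto simp: R_def)
qed

lemma refine: assumes "n dvd N" "m \<le> M" "0 < m"
  shows "LQ \<mu> N M \<subseteq> LQ lam n m \<or> LQ \<mu> N M \<inter> LQ lam n m = {}"
proof (cases "LQ \<mu> N M \<inter> LQ lam n m = {}")
  case True thus ?thesis by blast
next
  case False
  have M: "0 < M" using assms by simp
  obtain y where y: "y \<in> LQ \<mu> N M" "y \<in> LQ lam n m" using False by blast
  show ?thesis
  proof (cases "\<mu> = 0")
    case True
    thus ?thesis using y LQ_0[OF M] by auto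
  next
    case False
    have ynz: "y \<noteq> 0" using y(1) False LQ_nz Q_nz by (metis divide_eq_0_iff)
    have lnz: "lam \<noteq> 0" using LQ_nzD[OF assms(3) y(2) ynz] .
    have q1: "y / \<mu> \<in> Q N M" using y(1) False LQ_nz by simp
    have q2: "y / lam \<in> Q n m" using y(2) lnz LQ_nz by simp
    have "LQ \<mu> N M \<subseteq> LQ lam n m"
    proof
      fix y' assume y': "y' \<in> LQ \<mu> N M"
      have q3: "y' / \<mu> \<in> Q N M" using y' False LQ_nz by simp
      have "(y' / \<mu>) / (y / \<mu>) \<in> Q n m" using Q_sub[OF assms(1,2,3) Q_div[OF q3 q1 M]] .
      hence "((y' / \<mu>) / (y / \<mu>)) * (y / lam) \<in> Q n m" using Q_mult[OF _ q2 assms(3)] by blast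
      moreover have "((y' / \<mu>) / (y / \<mu>)) * (y / lam) = y' / lam" using False ynz by simp
      ultimately show "y' \<in> LQ lam n m" using LQ_nz lnz by simp
    qed
    thus ?thesis by blast
  qed
qed

end


lemma olt_trans: "olt a b \<Longrightarrow> olt b c \<Longrightarrow> olt a c"
  by (cases a; cases b; cases c) auto
lemma olt_total: "\<not> olt a b \<Longrightarrow> a = b \<or> olt b (a::'g::linorder option)"
  by (cases a; cases b) auto
lemma olt_irrefl: "\<not> olt a a"
  by (cases a) auto
lemma olt_asym: "olt a b \<Longrightarrow> \<not> olt b a"
  by (cases a; cases b) auto
lemma olt_notle_trans: "\<not> olt a b \<Longrightarrow> olt a c \<Longrightarrow> olt b (c::'g::linorder option)"
  using olt_total[of a b] olt_trans[of b a c] by auto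
lemma olt_notle_trans2: "\<not> olt a b \<Longrightarrow> olt c b \<Longrightarrow> olt c (a::'g::linorder option)"
  using olt_total[of a b] olt_trans[of c b a] by auto

context fqz begin

abbreviation ord where "ord x \<equiv> ordv v x"

definition precellk where "precellk k D \<longleftrightarrow> precell v pi k D"

lemma precell_cond: "precell v pi k D \<Longrightarrow> P \<in> precell_conds v pi k \<Longrightarrow> precell v pi k (D \<inter> {x. P x})"
  unfolding precell_def
proof (elim bexE)
  fix P' assume "P' \<in> precell_conds v pi k" "D = {x. length x = k \<and> P' x}" "P \<in> precell_conds v pi k"
  then show "\<exists>P''\<in>precell_conds v pi k. D \<inter> {x. P x} = {x. length x = k \<and> P'' x}"
    by (intro bexI[of _ "\<lambda>x. P' x \<and> P x"]) (auto intro: precell_conds.pc_conj)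
qed

lemma precell_ncond: "precell v pi k D \<Longrightarrow> P \<in> precell_conds v pi k \<Longrightarrow> precell v pi k (D \<inter> {x. \<not> P x})"
  by (rule precell_cond[OF _ precell_conds.pc_neg])

lemma precell_inter: "precell v pi k D1 \<Longrightarrow> precell v pi k D2 \<Longrightarrow> precell v pi k (D1 \<inter> D2)"
  unfolding precell_def
proof (elim bexE)
  fix P1 P2 assume "P1 \<in> precell_conds v pi k" "D1 = {x. length x = k \<and> P1 x}"
    "P2 \<in> precell_conds v pi k" "D2 = {x. length x = k \<and> P2 x}"
  then show "\<exists>P\<in>precell_conds v pi k. D1 \<inter> D2 = {x. length x = k \<and> P x}"
    by (intro bexI[of _ "\<lambda>x. P1 x \<and> P2 x"]) (auto intro: precell_conds.pc_conj)
qed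

lemma cond_ord: "pwf k a1 \<Longrightarrow> pwf k a2 \<Longrightarrow>
   (\<lambda>x. olt (ord (peval pi x a1)) (ord (pi powi l * peval pi x a2))) \<in> precell_conds v pi k"
  by (rule precell_conds.pc_ord)

lemma cond_ord0: "pwf k a1 \<Longrightarrow> pwf k a2 \<Longrightarrow>
   (\<lambda>x. olt (ord (peval pi x a1)) (ord (peval pi x a2))) \<in> precell_conds v pi k"
  using precell_conds.pc_ord[of k a1 a2 v pi 0] by simp

fun ctrm :: "'k center \<Rightarrow> 'k trm" where
  "ctrm (CConst a) = TConst a" | "ctrm (CVar i) = TVar i"

lemma qf_center: assumes "cwf k c" shows "qf_def_fun v pi k (\<lambda>x. ceval x c)"
proof -
  have "(\<lambda>x. teval x (TVar k) = teval x (ctrm c)) \<in> qf_preds v pi (Suc k)"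
    using assms by (intro qf_preds.qf_eq) (cases c; auto)+
  moreover have "\<forall>x y. length x = k \<longrightarrow> ((teval (x @ [y]) (TVar k) = teval (x @ [y]) (ctrm c)) \<longleftrightarrow> y = ceval x c)"
    using assms by (cases c) (auto simp: nth_append)
  ultimately show ?thesis unfolding qf_def_fun_def by (intro bexI) auto
qed

lemma cond_Q: "cwf k c \<Longrightarrow> cwf k c' \<Longrightarrow> 0 < n \<Longrightarrow> 0 < m \<Longrightarrow>
   (\<lambda>x. ceval x c - ceval x c' \<in> LQ lam n m) \<in> precell_conds v pi k"
  by (rule precell_conds.pc_Q[OF qf_center qf_center])

lemma precell_univ: "precell v pi k {x. length x = k}"
proof -
  have "(\<lambda>x. olt (ord (peval pi x (PConst 0))) (ord (peval pi x (PConst 0)))) \<in> precell_conds v pi k"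
    by (rule cond_ord0) simp_all
  hence "(\<lambda>x. \<not> olt (ord (peval pi x (PConst 0))) (ord (peval pi x (PConst 0)))) \<in> precell_conds v pi k"
    by (rule precell_conds.pc_neg)
  thus ?thesis unfolding precell_def using olt_irrefl by (intro bexI) auto
qed

definition gcell :: "'k center \<Rightarrow> 'k list set \<Rightarrow> 'k dpoly list \<Rightarrow> 'k dpoly list \<Rightarrow> ('k \<times> nat \<times> nat) list \<Rightarrow> ('k list \<times> 'k) set" where
  "gcell c D Ls Us Ss = {(x, t). x \<in> D \<and>
      (\<forall>p\<in>set Ls. olt (ord (peval pi x p)) (ord (t - ceval x c))) \<and>
      (\<forall>p\<in>set Us. olt (ord (t - ceval x c)) (ord (peval pi x p))) \<and>
      (\<forall>(lam, n, m)\<in>set Ss. t - ceval x c \<in> LQ lam n m)}"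

definition goodg where
  "goodg k c D Ls Us Ss \<longleftrightarrow> cwf k c \<and> precell v pi k D \<and> (\<forall>p\<in>set Ls \<union> set Us. pwf k p) \<and>
     (\<forall>(lam, n, m)\<in>set Ss. 0 < n \<and> 0 < m)"

definition decompS where
  "decompS k cs A \<longleftrightarrow> (\<exists>F. finite F \<and> pairwise disjnt F \<and> \<Union>F = A \<and> (\<forall>C\<in>F. \<exists>c\<in>cs. is_cell v pi k C c))"

lemma decompS_mono: assumes "decompS k cs A" "cs \<subseteq> cs'" shows "decompS k cs' A"
proof -
  obtain F where F: "finite F" "pairwise disjnt F" "\<Union>F = A" "\<forall>C\<in>F. \<exists>c\<in>cs. is_cell v pi k C c"
    using assms(1) unfolding decompS_def by (elim exE conjE) simp
  have "\<forall>C\<in>F. \<exists>c\<in>cs'. is_cell v pi k C c"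
  proof
    fix C assume "C \<in> F"
    then obtain c where "c \<in> cs" "is_cell v pi k C c" using F(4) by auto
    thus "\<exists>c\<in>cs'. is_cell v pi k C c" using assms(2) by auto
  qed
  thus ?thesis unfolding decompS_def using F by (intro exI[of _ F]) simp
qed

lemma decompS_empty: "decompS k cs {}"
  unfolding decompS_def by (intro exI[of _ "{}"]) simp

lemma decompS_Union: assumes "finite I" "\<And>i. i \<in> I \<Longrightarrow> decompS k cs (A i)"
  "\<And>i j. i \<in> I \<Longrightarrow> j \<in> I \<Longrightarrow> i \<noteq> j \<Longrightarrow> A i \<inter> A j = {}"
  shows "decompS k cs (\<Union>i\<in>I. A i)"
proof -
  have "\<forall>i\<in>I. \<exists>F. finite F \<and> pairwise disjnt F \<and> \<Union>F = A i \<and> (\<forall>C\<in>F. \<exists>c\<in>cs. is_cell v pi k C c)"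
    using assms(2) unfolding decompS_def by simp
  then obtain F where F: "\<And>i. i \<in> I \<Longrightarrow> finite (F i) \<and> pairwise disjnt (F i) \<and> \<Union>(F i) = A i \<and> (\<forall>C\<in>F i. \<exists>c\<in>cs. is_cell v pi k C c)"
    by (metis bchoice)
  show ?thesis unfolding decompS_def
  proof (intro exI[of _ "\<Union>i\<in>I. F i"] conjI)
    show "finite (\<Union>i\<in>I. F i)" using assms(1) F by blast
    show "pairwise disjnt (\<Union>i\<in>I. F i)"
    proof (rule pairwiseI)
      fix C C' assume C: "C \<in> (\<Union>i\<in>I. F i)" "C' \<in> (\<Union>i\<in>I. F i)" "C \<noteq> C'"
      then obtain i j where ij: "i \<in> I" "j \<in> I" "C \<in> F i" "C' \<in> F j" by blast
      show "disjnt C C'"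
      proof (cases "i = j")
        case True thus ?thesis using F[OF ij(1)] ij C(3) by (auto simp: pairwise_def)
      next
        case False
        have "C \<subseteq> A i" "C' \<subseteq> A j" using F ij by blast+
        thus ?thesis using assms(3)[OF ij(1,2) False] by (auto simp: disjnt_def)
      qed
    qed
    have "\<Union>(\<Union>i\<in>I. F i) = (\<Union>i\<in>I. \<Union>(F i))" by auto
    also have "\<dots> = (\<Union>i\<in>I. A i)" using F by (intro SUP_cong) auto
    finally show "\<Union>(\<Union>i\<in>I. F i) = (\<Union>i\<in>I. A i)" .
    show "\<forall>C\<in>\<Union>i\<in>I. F i. \<exists>c\<in>cs. is_cell v pi k C c" using F by blast
  qed
qed

lemma decompS_Un: assumes "decompS k cs A" "decompS k cs B" "A \<inter> B = {}" shows "decompS k cs (A \<union> B)"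
proof -
  have "decompS k cs (\<Union>i\<in>{True, False}. if i then A else B)"
    by (rule decompS_Union) (use assms in auto)
  thus ?thesis by (simp add: Un_commute)
qed

lemma decompS_eq: "decompS k cs A \<Longrightarrow> A = B \<Longrightarrow> decompS k cs B" by simp

end


lemma dvd_prod_list_mem: "(x::nat) \<in> set xs \<Longrightarrow> x dvd prod_list xs"
  by (induction xs) auto

context fqz begin

lemma gcell_single:
  assumes "cwf k c" "0 < N" "0 < M"
  shows "precell v pi k D \<Longrightarrow> (\<forall>p\<in>set Ls \<union> set Us. pwf k p) \<Longrightarrow> decompS k {c} (gcell c D Ls Us [(\<mu>, N, M)])"
proof (induction "length Ls + length Us" arbitrary: D Ls Us rule: less_induct)
  case less
  let ?S = "[(\<mu>, N, M)]"
  let ?T = "\<lambda>x t. ord (t - ceval x c)"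
  show ?case
  proof (cases "2 \<le> length Ls")
    case True
    then obtain p p' rest where L: "Ls = p # p' # rest" by (cases Ls; cases "tl Ls") auto
    define P where "P x = olt (ord (peval pi x p)) (ord (peval pi x p'))" for x
    have Pc: "P \<in> precell_conds v pi k" unfolding P_def using less.prems(2) L by (intro cond_ord0) auto
    define D1 where "D1 = D \<inter> {x. P x}"
    define D2 where "D2 = D \<inter> {x. \<not> P x}"
    have pD1: "precell v pi k D1" unfolding D1_def by (rule precell_cond[OF less.prems(1) Pc])
    have pD2: "precell v pi k D2" unfolding D2_def by (rule precell_ncond[OF less.prems(1) Pc])
    have eq: "gcell c D Ls Us ?S = gcell c D1 (p' # rest) Us ?S \<union> gcell c D2 (p # rest) Us ?S"
    proof (rule set_eqI, clarify)
      fix x t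
      show "(x, t) \<in> gcell c D Ls Us ?S \<longleftrightarrow> (x, t) \<in> gcell c D1 (p' # rest) Us ?S \<union> gcell c D2 (p # rest) Us ?S"
        unfolding gcell_def D1_def D2_def L P_def
        using olt_trans[of "ord (peval pi x p)" "ord (peval pi x p')" "?T x t"]
          olt_notle_trans[of "ord (peval pi x p)" "ord (peval pi x p')" "?T x t"]
        by auto
    qed
    have d1: "decompS k {c} (gcell c D1 (p' # rest) Us ?S)"
      using less.hyps[of "p' # rest" Us D1] pD1 less.prems(2) L by auto
    have d2: "decompS k {c} (gcell c D2 (p # rest) Us ?S)"
      using less.hyps[of "p # rest" Us D2] pD2 less.prems(2) L by auto
    have dis: "gcell c D1 (p' # rest) Us ?S \<inter> gcell c D2 (p # rest) Us ?S = {}"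
      by (auto simp: gcell_def D1_def D2_def)
    show ?thesis unfolding eq by (rule decompS_Un[OF d1 d2 dis])
  next
    case F1: False
    show ?thesis
    proof (cases "2 \<le> length Us")
      case True
      then obtain p p' rest where U: "Us = p # p' # rest" by (cases Us; cases "tl Us") auto
      define P where "P x = olt (ord (peval pi x p)) (ord (peval pi x p'))" for x
      have Pc: "P \<in> precell_conds v pi k" unfolding P_def using less.prems(2) U by (intro cond_ord0) auto
      define D1 where "D1 = D \<inter> {x. P x}"
      define D2 where "D2 = D \<inter> {x. \<not> P x}"
      have pD1: "precell v pi k D1" unfolding D1_def by (rule precell_cond[OF less.prems(1) Pc])
      have pD2: "precell v pi k D2" unfolding D2_def by (rule precell_ncond[OF less.prems(1) Pc])
      have eq: "gcell c D Ls Us ?S = gcell c D1 Ls (p # rest) ?S \<union> gcell c D2 Ls (p' # rest) ?S"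
      proof (rule set_eqI, clarify)
        fix x t
        show "(x, t) \<in> gcell c D Ls Us ?S \<longleftrightarrow> (x, t) \<in> gcell c D1 Ls (p # rest) ?S \<union> gcell c D2 Ls (p' # rest) ?S"
          unfolding gcell_def D1_def D2_def U P_def
          using olt_trans[of "?T x t" "ord (peval pi x p)" "ord (peval pi x p')"]
            olt_notle_trans2[of "ord (peval pi x p)" "ord (peval pi x p')" "?T x t"]
          by auto
      qed
      have d1: "decompS k {c} (gcell c D1 Ls (p # rest) ?S)"
        using less.hyps[of Ls "p # rest" D1] pD1 less.prems(2) U by auto
      have d2: "decompS k {c} (gcell c D2 Ls (p' # rest) ?S)"
        using less.hyps[of Ls "p' # rest" D2] pD2 less.prems(2) U by auto
      have dis: "gcell c D1 Ls (p # rest) ?S \<inter> gcell c D2 Ls (p' # rest) ?S = {}"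
        by (auto simp: gcell_def D1_def D2_def)
      show ?thesis unfolding eq by (rule decompS_Un[OF d1 d2 dis])
    next
      case F2: False
      define a1 where "a1 = (case Ls of [] \<Rightarrow> None | p # _ \<Rightarrow> Some p)"
      define a2 where "a2 = (case Us of [] \<Rightarrow> None | p # _ \<Rightarrow> Some p)"
      have Ls: "Ls = [] \<or> (\<exists>p. Ls = [p])" using F1 by (cases Ls; cases "tl Ls") auto
      have Us: "Us = [] \<or> (\<exists>p. Us = [p])" using F2 by (cases Us; cases "tl Us") auto
      have cell: "is_cell v pi k (gcell c D Ls Us ?S) c"
        unfolding is_cell_def
      proof (intro conjI exI)
        show "cwf k c" by (rule assms(1))
        show "precell v pi k D" by (rule less.prems(1))
        show "0 < N" "0 < M" by (rule assms(2), rule assms(3))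
        show "\<forall>p. a1 = Some p \<longrightarrow> pwf k p" using Ls less.prems(2) by (auto simp: a1_def)
        show "\<forall>p. a2 = Some p \<longrightarrow> pwf k p" using Us less.prems(2) by (auto simp: a2_def)
        show "gcell c D Ls Us ?S = {(x, t). x \<in> D \<and>
              (case a1 of None \<Rightarrow> True | Some p \<Rightarrow> olt (ord (peval pi x p)) (ord (t - ceval x c))) \<and>
              (case a2 of None \<Rightarrow> True | Some p \<Rightarrow> olt (ord (t - ceval x c)) (ord (peval pi x p))) \<and>
              t - ceval x c \<in> LQ \<mu> N M}"
          using Ls Us by (elim disjE exE; simp add: gcell_def a1_def a2_def)
      qed
      show ?thesis unfolding decompS_def
        by (intro exI[of _ "{gcell c D Ls Us ?S}"]) (use cell in auto)
    qed
  qed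
qed

lemma gcell_decomp: assumes "goodg k c D Ls Us Ss" shows "decompS k {c} (gcell c D Ls Us Ss)"
proof -
  have c: "cwf k c" and pD: "precell v pi k D" and wf: "\<forall>p\<in>set Ls \<union> set Us. pwf k p"
    and S: "\<forall>(lam, n, m)\<in>set Ss. 0 < n \<and> 0 < m" using assms by (auto simp: goodg_def)
  define N where "N = prod_list (map (\<lambda>(l, n, m). n) Ss)"
  define M where "M = sum_list (map (\<lambda>(l, n, m). m) Ss) + 1"
  have "0 \<notin> set (map (\<lambda>(l, n, m). n) Ss)" using S by force
  hence "N \<noteq> 0" unfolding N_def by (simp add: prod_list_zero_iff)
  hence N0: "0 < N" by simp
  have M0: "0 < M" by (simp add: M_def)
  have ndvd: "n dvd N" "m \<le> M" if "(l, n, m) \<in> set Ss" for l n m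
  proof -
    show "n dvd N" unfolding N_def using that by (intro dvd_prod_list_mem) force
    have "m \<le> sum_list (map (\<lambda>(l, n, m). m) Ss)" by (intro member_le_sum_list) (use that in force)+
    thus "m \<le> M" by (simp add: M_def)
  qed
  obtain R where R: "finite R" "\<forall>t. \<exists>\<mu>\<in>R. t \<in> LQ \<mu> N M"
    "\<forall>\<mu>\<in>R. \<forall>\<mu>'\<in>R. \<mu> \<noteq> \<mu>' \<longrightarrow> LQ \<mu> N M \<inter> LQ \<mu>' N M = {}"
    using cosets[OF N0 M0] by (elim exE conjE) simp
  define R' where "R' = {\<mu>\<in>R. \<forall>(l, n, m)\<in>set Ss. LQ \<mu> N M \<subseteq> LQ l n m}"
  have eq: "gcell c D Ls Us Ss = (\<Union>\<mu>\<in>R'. gcell c D Ls Us [(\<mu>, N, M)])"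
  proof (rule set_eqI, clarify)
    fix x t
    let ?y = "t - ceval x c"
    have "(\<forall>(l, n, m)\<in>set Ss. ?y \<in> LQ l n m) \<longleftrightarrow> (\<exists>\<mu>\<in>R'. ?y \<in> LQ \<mu> N M)"
    proof
      assume a: "\<forall>(l, n, m)\<in>set Ss. ?y \<in> LQ l n m"
      obtain \<mu> where \<mu>: "\<mu> \<in> R" "?y \<in> LQ \<mu> N M" using R(2) by blast
      have "\<forall>(l, n, m)\<in>set Ss. LQ \<mu> N M \<subseteq> LQ l n m"
      proof (clarify)
        fix l n m z assume lnm: "(l, n, m) \<in> set Ss" "z \<in> LQ \<mu> N M"
        have m0: "0 < m" using S lnm(1) by auto
        have "LQ \<mu> N M \<subseteq> LQ l n m \<or> LQ \<mu> N M \<inter> LQ l n m = {}"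
          by (rule refine[OF ndvd[OF lnm(1)] m0])
        moreover have "?y \<in> LQ l n m" using a lnm(1) by auto
        ultimately show "z \<in> LQ l n m" using \<mu>(2) lnm(2) by blast
      qed
      thus "\<exists>\<mu>\<in>R'. ?y \<in> LQ \<mu> N M" using \<mu> by (auto simp: R'_def)
    next
      assume "\<exists>\<mu>\<in>R'. ?y \<in> LQ \<mu> N M"
      then obtain \<mu> where "\<mu> \<in> R'" "?y \<in> LQ \<mu> N M" by blast
      thus "\<forall>(l, n, m)\<in>set Ss. ?y \<in> LQ l n m" by (auto simp: R'_def)
    qed
    thus "(x, t) \<in> gcell c D Ls Us Ss \<longleftrightarrow> (x, t) \<in> (\<Union>\<mu>\<in>R'. gcell c D Ls Us [(\<mu>, N, M)])"
      unfolding gcell_def by auto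
  qed
  have fin: "finite R'" using R(1) by (simp add: R'_def)
  show ?thesis unfolding eq
  proof (rule decompS_Union[OF fin])
    fix \<mu> assume "\<mu> \<in> R'"
    show "decompS k {c} (gcell c D Ls Us [(\<mu>, N, M)])" by (rule gcell_single[OF c N0 M0 pD wf])
  next
    fix \<mu> \<mu>' assume "\<mu> \<in> R'" "\<mu>' \<in> R'" "\<mu> \<noteq> \<mu>'"
    hence "LQ \<mu> N M \<inter> LQ \<mu>' N M = {}" using R(3) by (auto simp: R'_def)
    thus "gcell c D Ls Us [(\<mu>, N, M)] \<inter> gcell c D Ls Us [(\<mu>', N, M)] = {}"
      by (auto simp: gcell_def)
  qed
qed

end


fun dd :: "int \<Rightarrow> 'k::field \<Rightarrow> 'k center \<Rightarrow> 'k center \<Rightarrow> 'k dpoly" where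
  "dd j p (CConst a) (CConst b) = PConst (p powi j * (a - b))"
| "dd j p (CVar i) (CConst b) = PVarC j i b"
| "dd j p (CConst a) (CVar i) = PVarC j i a"
| "dd j p (CVar i) (CVar i') = PVarVar j i i'"

lemma dd_wf: "cwf k c \<Longrightarrow> cwf k c' \<Longrightarrow> pwf k (dd j p c c')"
  by (cases c; cases c') auto

context fqz begin

declare pi_nz[simp]

lemma dd_ord: "ord (peval pi x (dd j pi c c')) = ord (pi powi j * (ceval x c - ceval x c'))"
proof (cases c; cases c')
  fix a i assume "c = CConst a" "c' = CVar i"
  moreover have "pi powi j * (x ! i - a) = - (pi powi j * (a - x ! i))" by (simp add: algebra_simps)
  ultimately show ?thesis by (simp add: ordv_def vneg)
qed auto

lemma ord_nz: "y \<noteq> 0 \<Longrightarrow> ord y = Some (v y)" by (simp add: ordv_def)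
lemma ord_0: "ord 0 = None" by (simp add: ordv_def)
lemma ord_neg: "ord (- y) = ord y" by (simp add: ordv_def vneg)

lemma v_pd: "d \<noteq> 0 \<Longrightarrow> v (pi powi a * d) = v (pi powi a) + v d"
  using vmult[of "pi powi a" d] pi_nz by simp

lemma pd_nz: "d \<noteq> 0 \<Longrightarrow> pi powi a * d \<noteq> 0" using pi_nz by simp
lemma pd_nz_iff[simp]: "pi powi a * d = 0 \<longleftrightarrow> d = 0" using pi_nz by simp

lemma v_pd_mono: "d \<noteq> 0 \<Longrightarrow> a \<le> b \<Longrightarrow> v (pi powi a * d) \<le> v (pi powi b * d)"
  using vpowi_mono_le[of a b] by (simp add: v_pd)

lemma MP_int: "z \<noteq> 0 \<Longrightarrow> v (pi powi int m) \<le> v z \<Longrightarrow> z \<in> MP m"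
  by (simp add: MP_iff)

text \<open>Region near the second center.\<close>
lemma near2: assumes d: "d \<noteq> 0" and m: "0 < m" and N2: "olt (ord (pi powi (int m - 1) * d)) (ord w)"
  shows "ord (w + d) = ord d \<and> (w + d \<in> LQ l n m \<longleftrightarrow> d \<in> LQ l n m)"
proof (cases "w = 0")
  case True thus ?thesis by simp
next
  case False
  have lt: "v (pi powi (int m - 1)) + v d < v w" using N2 False d by (simp add: ord_nz v_pd)
  define z where "z = w / d"
  have znz: "z \<noteq> 0" using False d by (simp add: z_def)
  have "v z = v w - v d" using False d by (simp add: z_def vdiv)
  moreover have "v (pi powi (int m - 1)) < v w - v d" using lt by (simp add: less_diff_eq)
  ultimately have "v (pi powi (int m - 1)) < v z" by simp
  hence "v (pi powi (int m - 1 + 1)) \<le> v z" by (rule disc_step)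
  hence zm: "z \<in> MP m" using znz by (intro MP_int) simp_all
  have wd: "w + d = d * (1 + z)" using d by (simp add: z_def algebra_simps)
  have u: "unit (1 + z)" by (rule one_plus_unit[OF zm m])
  have "ord (w + d) = ord d" using u d unfolding wd by (simp add: ord_nz vmult unit_def)
  moreover have "w + d \<in> LQ l n m \<longleftrightarrow> d \<in> LQ l n m"
    unfolding wd by (rule LQ_transfer[OF Q_1plus[OF zm m] m])
  ultimately show ?thesis by simp
qed

lemma ord_pd_neg: "ord (pi powi a * (- d)) = ord (pi powi a * d)"
  using ord_neg[of "pi powi a * d"] by simp

text \<open>Region near the first center.\<close>
lemma near1: assumes d: "d \<noteq> 0" and m: "0 < m" and N1: "olt (ord (pi powi (int m - 1) * d)) (ord u)"
  shows "ord (u - d) = ord d \<and> (u - d \<in> LQ l n m \<longleftrightarrow> - d \<in> LQ l n m)"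
  using near2[of "- d" m u l n] d m N1 by (simp add: ord_pd_neg ord_neg)

text \<open>Far region.\<close>
lemma far: assumes d: "d \<noteq> 0" and m: "0 < m" and F: "olt (ord u) (ord (pi powi (1 - int m) * d))"
  shows "ord (u - d) = ord u \<and> (u - d \<in> LQ l n m \<longleftrightarrow> u \<in> LQ l n m)"
proof -
  have unz: "u \<noteq> 0" using F by (auto simp: ordv_def)
  have lt: "v u < v (pi powi (- int m + 1)) + v d" using F unz d by (simp add: ord_nz v_pd)
  define z where "z = - d / u"
  have znz: "z \<noteq> 0" using unz d by (simp add: z_def)
  have "v z = v d - v u" using unz d by (simp add: z_def vdiv vneg)
  moreover have "v u - v d < v (pi powi (- int m + 1))" using lt by (simp add: algebra_simps)
  hence "v u - v d \<le> v (pi powi (- int m))" by (rule disc_le)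
  moreover have "v (pi powi (- int m)) = - v (pi powi int m)"
    using pi_nz by (simp add: power_int_minus vinv)
  ultimately have "v u - v d \<le> - v (pi powi int m)" by simp
  hence "v (pi powi int m) \<le> - (v u - v d)" by (simp only: le_minus_iff)
  hence "v (pi powi int m) \<le> v z" using \<open>v z = v d - v u\<close> by simp
  hence zm: "z \<in> MP m" using znz by (intro MP_int)
  have ud: "u - d = u * (1 + z)" using unz by (simp add: z_def algebra_simps)
  have un: "unit (1 + z)" by (rule one_plus_unit[OF zm m])
  have "ord (u - d) = ord u" using un unz unfolding ud by (simp add: ord_nz vmult unit_def)
  moreover have "u - d \<in> LQ l n m \<longleftrightarrow> u \<in> LQ l n m"
    unfolding ud by (rule LQ_transfer[OF Q_1plus[OF zm m] m])
  ultimately show ?thesis by simp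
qed

lemma N1_N2: assumes d: "d \<noteq> 0" "0 < m1" "0 < m2"
  and N1: "olt (ord (pi powi (int m2 - 1) * d)) (ord u)"
  and N2: "olt (ord (pi powi (int m1 - 1) * d)) (ord (u - d))" shows False
proof -
  have "ord (u - d) = ord d" using near1[OF d(1) d(3) N1] by simp
  hence "v (pi powi (int m1 - 1) * d) < v d" using N2 d by (simp add: ord_nz)
  moreover have "v (pi powi 0 * d) \<le> v (pi powi (int m1 - 1) * d)" using v_pd_mono[OF d(1), of 0 "int m1 - 1"] d(2) by simp
  ultimately show False by simp
qed

lemma F_N2: assumes d: "d \<noteq> 0" "0 < m1" "0 < m2"
  and F: "olt (ord u) (ord (pi powi (1 - int m2) * d))"
  and N2: "olt (ord (pi powi (int m1 - 1) * d)) (ord (u - d))" shows False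
proof -
  have e: "ord (u - d) = ord u" using far[OF d(1) d(3) F] by simp
  have unz: "u \<noteq> 0" using F by (auto simp: ordv_def)
  have a: "v u < v (pi powi (1 - int m2) * d)" using F unz d by (simp add: ord_nz)
  have b: "v (pi powi (int m1 - 1) * d) < v u" using N2 e unz d by (simp add: ord_nz)
  have "v (pi powi (1 - int m2) * d) \<le> v (pi powi (int m1 - 1) * d)" using v_pd_mono[OF d(1)] d by simp
  thus False using a b by simp
qed

lemma F_N1: assumes d: "d \<noteq> 0" "0 < m2"
  and F: "olt (ord u) (ord (pi powi (1 - int m2) * d))"
  and N1: "olt (ord (pi powi (int m2 - 1) * d)) (ord u)" shows False
proof -
  have unz: "u \<noteq> 0" using F by (auto simp: ordv_def)
  have a: "v u < v (pi powi (1 - int m2) * d)" using F unz d by (simp add: ord_nz)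
  have b: "v (pi powi (int m2 - 1) * d) < v u" using N1 unz d by (simp add: ord_nz)
  have "v (pi powi (1 - int m2) * d) \<le> v (pi powi (int m2 - 1) * d)" using v_pd_mono[OF d(1)] d by simp
  thus False using a b by simp
qed

definition slice where
  "slice j d u \<longleftrightarrow> olt (ord (pi powi (j - 1) * d)) (ord u) \<and> olt (ord u) (ord (pi powi (j + 1) * d))"

lemma slice_iff: assumes d: "d \<noteq> 0" shows "slice j d u \<longleftrightarrow> u \<noteq> 0 \<and> v u = v (pi powi j * d)"
proof
  assume s: "slice j d u"
  have unz: "u \<noteq> 0" using s by (auto simp: slice_def ordv_def)
  have a: "v (pi powi (j - 1)) + v d < v u" "v u < v (pi powi (j + 1)) + v d"
    using s unz d by (auto simp: slice_def ord_nz v_pd)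
  have "v (pi powi (j - 1 + 1)) \<le> v u - v d" using disc_step[of "j - 1" "v u - v d"] a(1) by (simp add: algebra_simps)
  moreover have "v u - v d \<le> v (pi powi j)" using disc_le[of "v u - v d" j] a(2) by (simp add: algebra_simps)
  ultimately have "v u - v d = v (pi powi j)" by simp
  hence "v u = v (pi powi j) + v d" by (simp add: diff_eq_eq)
  thus "u \<noteq> 0 \<and> v u = v (pi powi j * d)" using unz d v_pd[OF d, of j] by simp
next
  assume a: "u \<noteq> 0 \<and> v u = v (pi powi j * d)"
  have "v (pi powi (j - 1)) < v (pi powi j)" "v (pi powi j) < v (pi powi (j + 1))" using vpowi_mono by auto
  thus "slice j d u" using a d by (simp add: slice_def ord_nz v_pd)
qed

lemma slice_N1: assumes "d \<noteq> 0" "j \<le> int m2 - 1" "slice j d u" "olt (ord (pi powi (int m2 - 1) * d)) (ord u)" shows False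
proof -
  have "u \<noteq> 0" "v u = v (pi powi j * d)" using slice_iff assms by auto
  moreover have "v (pi powi j * d) \<le> v (pi powi (int m2 - 1) * d)" using v_pd_mono assms by simp
  ultimately show False using assms(4) assms(1) by (simp add: ord_nz)
qed

lemma slice_F: assumes "d \<noteq> 0" "1 - int m2 \<le> j" "slice j d u" "olt (ord u) (ord (pi powi (1 - int m2) * d))" shows False
proof -
  have "u \<noteq> 0" "v u = v (pi powi j * d)" using slice_iff assms by auto
  moreover have "v (pi powi (1 - int m2) * d) \<le> v (pi powi j * d)" using v_pd_mono assms by simp
  ultimately show False using assms(4) assms(1) by (simp add: ord_nz)
qed

lemma slice_unique: "d \<noteq> 0 \<Longrightarrow> slice j d u \<Longrightarrow> slice j' d u \<Longrightarrow> j = j'"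
  using slice_iff[of d] vpowi_mono[of j j'] vpowi_mono[of j' j] v_pd[of d]
  by (cases "j < j'"; cases "j' < j") auto

lemma slice_cover: assumes d: "d \<noteq> 0" and m2: "0 < m2"
  and nN1: "\<not> olt (ord (pi powi (int m2 - 1) * d)) (ord u)"
  and nF: "\<not> olt (ord u) (ord (pi powi (1 - int m2) * d))"
  shows "\<exists>j. 1 - int m2 \<le> j \<and> j \<le> int m2 - 1 \<and> slice j d u"
proof -
  have unz: "u \<noteq> 0" using nN1 d by (auto simp: ordv_def)
  have a: "v u \<le> v (pi powi (int m2 - 1)) + v d" using nN1 unz d by (simp add: ord_nz v_pd)
  have b: "v (pi powi (1 - int m2)) + v d \<le> v u" using nF unz d by (simp add: ord_nz v_pd)
  have "v (pi powi (int m2 - 1)) < v (pi powi (int m2 - 1 + 1))" using vpowi_mono[of "int m2 - 1" "int m2 - 1 + 1"] by linarith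
  hence "v u < v (pi powi (int m2 - 1 + 1)) + v d" using a by (meson add_strict_right_mono le_less_trans)
  hence a': "v u - v d < v (pi powi (int m2 - 1 + 1))" by (simp only: diff_less_eq)
  have b': "v (pi powi (1 - int m2)) \<le> v u - v d" using b by (simp add: algebra_simps)
  obtain j where j: "1 - int m2 \<le> j" "j < int m2 - 1 + 1" "v u - v d = v (pi powi j)"
    using multiple[OF b' a'] by blast
  have "v u = v (pi powi j) + v d" using j(3) by (simp add: diff_eq_eq)
  hence "slice j d u" using slice_iff[OF d] unz v_pd[OF d, of j] by simp
  thus ?thesis using j by (intro exI[of _ j]) simp
qed

end


context fqz begin

lemma v_mult_bound: assumes "x \<noteq> 0" "y \<noteq> 0" "v (pi powi a) \<le> v x" "v (pi powi b) \<le> v y"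
  shows "v (pi powi (a + b)) \<le> v (x * y)"
  using add_mono[OF assms(3,4)] vpowi[OF pi_nz, of a b] vmult[OF assms(1,2)] by simp

lemma MP_of_bound: "v (pi powi a) \<le> v x \<Longrightarrow> int m \<le> a \<Longrightarrow> x \<in> MP m"
  using vpowi_mono_le[of "int m" a] by (auto simp: MP_iff)

lemma MP_bound: "x \<in> MP m \<Longrightarrow> x \<noteq> 0 \<Longrightarrow> v (pi powi int m) \<le> v x"
  by (simp add: MP_iff)

lemma theta_const:
  assumes M: "0 < M"
    and G: "d \<noteq> 0" "slice j d u" "u \<in> LQ \<mu> 1 M" "d \<in> LQ \<nu> 1 M"
    and G0: "d0 \<noteq> 0" "slice j d0 u0" "u0 \<in> LQ \<mu> 1 M" "d0 \<in> LQ \<nu> 1 M"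
  shows "cg M ((u / d) / (u0 / d0)) 1"
proof -
  have su: "u \<noteq> 0" "v u = v (pi powi j * d)" using slice_iff[OF G(1)] G(2) by auto
  have su0: "u0 \<noteq> 0" "v u0 = v (pi powi j * d0)" using slice_iff[OF G0(1)] G0(2) by auto
  have \<mu>: "\<mu> \<noteq> 0" using LQ_nzD[OF M G(3) su(1)] .
  have \<nu>: "\<nu> \<noteq> 0" using LQ_nzD[OF M G(4) G(1)] .
  have q1: "u / u0 \<in> Q 1 M"
  proof -
    have a: "u / \<mu> \<in> Q 1 M" "u0 / \<mu> \<in> Q 1 M" using G(3) G0(3) \<mu> LQ_nz by auto
    have "(u / \<mu>) / (u0 / \<mu>) \<in> Q 1 M" by (rule Q_div[OF a M])
    moreover have "(u / \<mu>) / (u0 / \<mu>) = u / u0" using \<mu> su0 by simp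
    ultimately show ?thesis by metis
  qed
  have q2: "d / d0 \<in> Q 1 M"
  proof -
    have a: "d / \<nu> \<in> Q 1 M" "d0 / \<nu> \<in> Q 1 M" using G(4) G0(4) \<nu> LQ_nz by auto
    have "(d / \<nu>) / (d0 / \<nu>) \<in> Q 1 M" by (rule Q_div[OF a M])
    moreover have "(d / \<nu>) / (d0 / \<nu>) = d / d0" using \<nu> G0(1) by simp
    ultimately show ?thesis by metis
  qed
  have "v (u / u0) = v (d / d0)"
    using su su0 G(1) G0(1) by (simp add: vdiv v_pd)
  hence "cg M ((u / u0) / (d / d0)) 1" by (rule Q_same_val[OF q1 q2 _ M])
  moreover have "(u / u0) / (d / d0) = (u / d) / (u0 / d0)" using G(1) G0(1) su su0 by simp
  ultimately show ?thesis by metis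
qed

lemma ud_decomp: assumes th: "\<theta> \<noteq> 0" and d: "d \<noteq> 0" and c: "cg M ((u / d) / \<theta>) 1"
  shows "\<exists>\<epsilon>. \<epsilon> \<in> MP M \<and> u - d = d * ((\<theta> - 1) + \<theta> * \<epsilon>)"
proof -
  define \<epsilon> where "\<epsilon> = (u / d) / \<theta> - 1"
  have "u - d = d * ((\<theta> - 1) + \<theta> * \<epsilon>)" using th d by (simp add: \<epsilon>_def field_simps)
  thus ?thesis using c by (intro exI[of _ \<epsilon>]) (simp add: \<epsilon>_def)
qed

lemma middle_A:
  assumes m: "0 < m1" "0 < m2" and MM: "M = 2 * (m1 + m2)"
    and th: "\<theta> \<noteq> 0" "v \<theta> = v (pi powi j)" "1 - int m2 \<le> j"
    and near: "\<theta> = 1 \<or> v (pi powi int m1) \<le> v (\<theta> - 1)"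
    and d: "d \<noteq> 0" and c: "cg M ((u / d) / \<theta>) 1"
  shows "olt (ord (pi powi (int m1 - 1) * d)) (ord (u - d))"
proof -
  obtain \<epsilon> where e: "\<epsilon> \<in> MP M" "u - d = d * ((\<theta> - 1) + \<theta> * \<epsilon>)" using ud_decomp[OF th(1) d c] by blast
  have t1: "\<theta> - 1 \<in> MP m1" using near by (auto simp: MP_iff)
  have t2: "\<theta> * \<epsilon> \<in> MP m1"
  proof (cases "\<epsilon> = 0")
    case True thus ?thesis by (simp add: MP0)
  next
    case False
    have "v (pi powi (j + int M)) \<le> v (\<theta> * \<epsilon>)"
      using v_mult_bound[OF th(1) False _ MP_bound[OF e(1) False]] th(2) by simp
    thus ?thesis by (rule MP_of_bound) (use th(3) MM in simp)
  qed
  have X: "(\<theta> - 1) + \<theta> * \<epsilon> \<in> MP m1" by (rule MP_add[OF t1 t2])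
  show ?thesis
  proof (cases "(\<theta> - 1) + \<theta> * \<epsilon> = 0")
    case True thus ?thesis using e(2) d by (simp add: ord_nz ord_0)
  next
    case False
    have "v (pi powi int m1) \<le> v ((\<theta> - 1) + \<theta> * \<epsilon>)" using MP_bound[OF X False] .
    moreover have "v (pi powi (int m1 - 1)) < v (pi powi int m1)" using vpowi_mono[of "int m1 - 1" "int m1"] by simp
    ultimately have "v (pi powi (int m1 - 1)) + v d < v d + v ((\<theta> - 1) + \<theta> * \<epsilon>)"
      by (simp add: add.commute)
    thus ?thesis using e(2) d False by (simp add: ord_nz v_pd vmult)
  qed
qed

lemma middle_B:
  assumes m: "0 < m1" "0 < m2" and MM: "M = 2 * (m1 + m2)"
    and th: "\<theta> \<noteq> 0" "v \<theta> = v (pi powi j)" "1 - int m2 \<le> j"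
    and th1: "\<theta> \<noteq> 1" "v (\<theta> - 1) = v (pi powi i)" "i \<le> int m1 - 1"
    and d: "d \<noteq> 0" and c: "cg M ((u / d) / \<theta>) 1"
  shows "ord (u - d) = ord (pi powi i * d) \<and> (u - d \<in> LQ l n m2 \<longleftrightarrow> d \<in> LQ (l / (\<theta> - 1)) n m2)
    \<and> \<not> olt (ord (pi powi (int m1 - 1) * d)) (ord (u - d))"
proof -
  obtain \<epsilon> where e: "\<epsilon> \<in> MP M" "u - d = d * ((\<theta> - 1) + \<theta> * \<epsilon>)" using ud_decomp[OF th(1) d c] by blast
  have tnz: "\<theta> - 1 \<noteq> 0" using th1(1) by simp
  define \<eta> where "\<eta> = \<theta> * \<epsilon> / (\<theta> - 1)"
  have ud: "u - d = d * (\<theta> - 1) * (1 + \<eta>)" using e(2) tnz by (simp add: \<eta>_def field_simps)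
  have eta: "\<eta> \<in> MP m2"
  proof (cases "\<epsilon> = 0")
    case True thus ?thesis by (simp add: \<eta>_def MP0)
  next
    case False
    have a: "v (pi powi (j + int M)) \<le> v (\<theta> * \<epsilon>)"
      using v_mult_bound[OF th(1) False _ MP_bound[OF e(1) False]] th(2) by simp
    have te: "\<theta> * \<epsilon> \<noteq> 0" using th(1) False by simp
    have "v \<eta> = v (\<theta> * \<epsilon>) - v (pi powi i)" using te tnz th1(2) by (simp add: \<eta>_def vdiv)
    moreover have "v (pi powi (j + int M)) = v (pi powi (j + int M - i)) + v (pi powi i)"
      using vpowi[OF pi_nz, of "j + int M - i" i] by simp
    ultimately have "v (pi powi (j + int M - i)) \<le> v \<eta>" using a by (simp add: le_diff_eq)
    thus ?thesis by (rule MP_of_bound) (use th(3) th1(3) MM in simp)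
  qed
  have un: "unit (1 + \<eta>)" by (rule one_plus_unit[OF eta m(2)])
  have dt: "d * (\<theta> - 1) \<noteq> 0" using d tnz by simp
  have o: "ord (u - d) = ord (pi powi i * d)"
    using un dt d tnz th1(2) unfolding ud by (simp add: ord_nz vmult v_pd unit_def add.commute)
  have "u - d \<in> LQ l n m2 \<longleftrightarrow> d * (\<theta> - 1) \<in> LQ l n m2"
    unfolding ud by (rule LQ_transfer[OF Q_1plus[OF eta m(2)] m(2)])
  also have "\<dots> \<longleftrightarrow> d \<in> LQ (l / (\<theta> - 1)) n m2"
    using LQ_scale[OF tnz, of d "l / (\<theta> - 1)" n m2] tnz by (simp add: mult.commute)
  finally have lq: "u - d \<in> LQ l n m2 \<longleftrightarrow> d \<in> LQ (l / (\<theta> - 1)) n m2" .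
  have "v (pi powi i * d) \<le> v (pi powi (int m1 - 1) * d)" using v_pd_mono[OF d th1(3)] .
  hence "\<not> olt (ord (pi powi (int m1 - 1) * d)) (ord (u - d))" using o d by (simp add: ord_nz)
  thus ?thesis using o lq by simp
qed

lemma theta_lower: assumes "\<theta> \<noteq> 0" "\<theta> \<noteq> 1" "v \<theta> = v (pi powi j)" "1 - int m2 \<le> j"
  shows "v (pi powi (- int m2)) \<le> v (\<theta> - 1)"
proof -
  have a: "min (v \<theta>) (v 1) \<le> v (\<theta> - 1)" using vsub_min[of \<theta> 1] assms by simp
  have "v (pi powi (- int m2)) \<le> v (pi powi j)" using vpowi_mono_le[of "- int m2" j] assms by simp
  moreover have "v (pi powi (- int m2)) \<le> v 1" using vpowi_mono_le[of "- int m2" 0] by (simp add: v1)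
  ultimately show ?thesis using a assms(3) by (simp add: min_def split: if_splits)
qed

end


datatype 'k ridx = R0 | RN2 | RN1 | RF | RM int 'k 'k

context fqz begin

definition Bl :: "'k dpoly list \<Rightarrow> 'k dpoly \<Rightarrow> 'k list set" where
  "Bl Ls e = {x. \<forall>p\<in>set Ls. olt (ord (peval pi x p)) (ord (peval pi x e))}"
definition Bu :: "'k dpoly list \<Rightarrow> 'k dpoly \<Rightarrow> 'k list set" where
  "Bu Us e = {x. \<forall>p\<in>set Us. olt (ord (peval pi x e)) (ord (peval pi x p))}"

lemma precell_Bl: "precell v pi k D \<Longrightarrow> \<forall>p\<in>set Ls. pwf k p \<Longrightarrow> pwf k e \<Longrightarrow> precell v pi k (D \<inter> Bl Ls e)"
proof (induction Ls arbitrary: D)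
  case Nil thus ?case by (simp add: Bl_def)
next
  case (Cons p Ls)
  have "precell v pi k (D \<inter> {x. olt (ord (peval pi x p)) (ord (peval pi x e))})"
    using Cons.prems by (intro precell_cond cond_ord0) auto
  hence "precell v pi k ((D \<inter> {x. olt (ord (peval pi x p)) (ord (peval pi x e))}) \<inter> Bl Ls e)"
    using Cons by simp
  moreover have "(D \<inter> {x. olt (ord (peval pi x p)) (ord (peval pi x e))}) \<inter> Bl Ls e = D \<inter> Bl (p # Ls) e"
    by (auto simp: Bl_def)
  ultimately show ?case by simp
qed

lemma precell_Bu: "precell v pi k D \<Longrightarrow> \<forall>p\<in>set Us. pwf k p \<Longrightarrow> pwf k e \<Longrightarrow> precell v pi k (D \<inter> Bu Us e)"
proof (induction Us arbitrary: D)
  case Nil thus ?case by (simp add: Bu_def)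
next
  case (Cons p Us)
  have "precell v pi k (D \<inter> {x. olt (ord (peval pi x e)) (ord (peval pi x p))})"
    using Cons.prems by (intro precell_cond cond_ord0) auto
  hence "precell v pi k ((D \<inter> {x. olt (ord (peval pi x e)) (ord (peval pi x p))}) \<inter> Bu Us e)"
    using Cons by simp
  moreover have "(D \<inter> {x. olt (ord (peval pi x e)) (ord (peval pi x p))}) \<inter> Bu Us e = D \<inter> Bu (p # Us) e"
    by (auto simp: Bu_def)
  ultimately show ?case by simp
qed

lemma precell_Q: "precell v pi k D \<Longrightarrow> cwf k c \<Longrightarrow> cwf k c' \<Longrightarrow> 0 < n \<Longrightarrow> 0 < m \<Longrightarrow>
   precell v pi k (D \<inter> {x. ceval x c - ceval x c' \<in> LQ lam n m})"
  by (intro precell_cond cond_Q)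

lemma precell_nQ: "precell v pi k D \<Longrightarrow> cwf k c \<Longrightarrow> cwf k c' \<Longrightarrow> 0 < n \<Longrightarrow> 0 < m \<Longrightarrow>
   precell v pi k (D \<inter> {x. \<not> ceval x c - ceval x c' \<in> LQ lam n m})"
  by (intro precell_ncond cond_Q)

lemma LQ01: "y \<in> LQ 0 1 1 \<longleftrightarrow> y = 0" using LQ_0[of 1 1] by simp

end

locale twocells = fqz v pi q for v :: "'k::field \<Rightarrow> 'g::linordered_ab_group_add" and pi q +
  fixes k :: nat and c1 c2 :: "'k center" and D1 D2 :: "'k list set" and L1 L2 U1 U2 :: "'k dpoly list"
    and l1 l2 :: 'k and n1 n2 m1 m2 :: nat
  assumes g1: "goodg k c1 D1 L1 U1 [(l1, n1, m1)]" and g2: "goodg k c2 D2 L2 U2 [(l2, n2, m2)]"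
begin

lemma c1: "cwf k c1" and c2: "cwf k c2" and pD1: "precell v pi k D1" and pD2: "precell v pi k D2"
  and wL1: "\<forall>p\<in>set L1. pwf k p" and wU1: "\<forall>p\<in>set U1. pwf k p"
  and wL2: "\<forall>p\<in>set L2. pwf k p" and wU2: "\<forall>p\<in>set U2. pwf k p"
  and n1: "0 < n1" and m1: "0 < m1" and n2: "0 < n2" and m2: "0 < m2"
  using g1 g2 by (auto simp: goodg_def)

definition dx where "dx x = ceval x c2 - ceval x c1"
definition MM where "MM = 2 * (m1 + m2)"
definition A1 where "A1 = gcell c1 D1 L1 U1 [(l1, n1, m1)]"
definition A2 where "A2 = gcell c2 D2 L2 U2 [(l2, n2, m2)]"
definition N2 where "N2 x t \<longleftrightarrow> olt (ord (pi powi (int m1 - 1) * dx x)) (ord (t - ceval x c2))"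
definition N1 where "N1 x t \<longleftrightarrow> olt (ord (pi powi (int m2 - 1) * dx x)) (ord (t - ceval x c1))"
definition FF where "FF x t \<longleftrightarrow> olt (ord (t - ceval x c1)) (ord (pi powi (1 - int m2) * dx x))"

definition DD where "DD = D1 \<inter> D2"
definition Dn where "Dn = DD \<inter> {x. \<not> ceval x c2 - ceval x c1 \<in> LQ 0 1 1}"
abbreviation "e0 \<equiv> dd 0 pi c2 c1"

lemma MM0: "0 < MM" using m1 by (simp add: MM_def)

lemma pDD: "precell v pi k DD" unfolding DD_def by (rule precell_inter[OF pD1 pD2])
lemma pDn: "precell v pi k Dn" unfolding Dn_def by (rule precell_nQ[OF pDD c2 c1]) simp_all
lemma Dn_iff: "x \<in> Dn \<longleftrightarrow> x \<in> D1 \<and> x \<in> D2 \<and> dx x \<noteq> 0"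
  using LQ01[of "ceval x c2 - ceval x c1"] by (simp add: Dn_def DD_def dx_def)

lemma wdd: "pwf k (dd j pi c2 c1)" by (rule dd_wf[OF c2 c1])

lemma dd_ord': "ord (peval pi x (dd j pi c2 c1)) = ord (pi powi j * dx x)"
  by (simp add: dd_ord dx_def)

definition piece0 where
  "piece0 = gcell c1 (DD \<inter> {x. ceval x c2 - ceval x c1 \<in> LQ 0 1 1}) (L1 @ L2) (U1 @ U2) [(l1, n1, m1), (l2, n2, m2)]"
definition pieceN2 where
  "pieceN2 = gcell c2 (((Dn \<inter> {x. ceval x c2 - ceval x c1 \<in> LQ l1 n1 m1}) \<inter> Bl L1 e0) \<inter> Bu U1 e0)
     (L2 @ [dd (int m1 - 1) pi c2 c1]) U2 [(l2, n2, m2)]"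
definition pieceN1 where
  "pieceN1 = gcell c1 (((Dn \<inter> {x. ceval x c1 - ceval x c2 \<in> LQ l2 n2 m2}) \<inter> Bl L2 e0) \<inter> Bu U2 e0)
     (L1 @ [dd (int m2 - 1) pi c2 c1]) U1 [(l1, n1, m1)]"
definition pieceF where
  "pieceF = gcell c1 Dn (L1 @ L2) (U1 @ U2 @ [dd (1 - int m2) pi c2 c1]) [(l1, n1, m1), (l2, n2, m2)]"
definition pieceM where
  "pieceM j \<mu> \<nu> \<theta> i = gcell c1 ((((Dn \<inter> {x. ceval x c2 - ceval x c1 \<in> LQ \<nu> 1 MM})
      \<inter> {x. ceval x c2 - ceval x c1 \<in> LQ (l2 / (\<theta> - 1)) n2 m2}) \<inter> Bl L2 (dd i pi c2 c1)) \<inter> Bu U2 (dd i pi c2 c1))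
     (L1 @ [dd (j - 1) pi c2 c1]) (U1 @ [dd (j + 1) pi c2 c1]) [(l1, n1, m1), (\<mu>, 1, MM)]"

lemma good0: "goodg k c1 (DD \<inter> {x. ceval x c2 - ceval x c1 \<in> LQ 0 1 1}) (L1 @ L2) (U1 @ U2) [(l1, n1, m1), (l2, n2, m2)]"
  unfolding goodg_def using c1 c2 pDD wL1 wL2 wU1 wU2 n1 n2 m1 m2
  by (auto intro: precell_Q)

lemma goodN2: "goodg k c2 (((Dn \<inter> {x. ceval x c2 - ceval x c1 \<in> LQ l1 n1 m1}) \<inter> Bl L1 e0) \<inter> Bu U1 e0)
     (L2 @ [dd (int m1 - 1) pi c2 c1]) U2 [(l2, n2, m2)]"
  unfolding goodg_def using c1 c2 pDn wL1 wL2 wU1 wU2 n1 n2 m1 m2 wdd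
  by (auto intro!: precell_Bu precell_Bl precell_Q)

lemma goodN1: "goodg k c1 (((Dn \<inter> {x. ceval x c1 - ceval x c2 \<in> LQ l2 n2 m2}) \<inter> Bl L2 e0) \<inter> Bu U2 e0)
     (L1 @ [dd (int m2 - 1) pi c2 c1]) U1 [(l1, n1, m1)]"
  unfolding goodg_def using c1 c2 pDn wL1 wL2 wU1 wU2 n1 n2 m1 m2 wdd
  by (auto intro!: precell_Bu precell_Bl precell_Q)

lemma goodF: "goodg k c1 Dn (L1 @ L2) (U1 @ U2 @ [dd (1 - int m2) pi c2 c1]) [(l1, n1, m1), (l2, n2, m2)]"
  unfolding goodg_def using c1 c2 pDn wL1 wL2 wU1 wU2 n1 n2 m1 m2 wdd
  by auto

lemma goodM: "goodg k c1 ((((Dn \<inter> {x. ceval x c2 - ceval x c1 \<in> LQ \<nu> 1 MM})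
      \<inter> {x. ceval x c2 - ceval x c1 \<in> LQ (l2 / (\<theta> - 1)) n2 m2}) \<inter> Bl L2 (dd i pi c2 c1)) \<inter> Bu U2 (dd i pi c2 c1))
     (L1 @ [dd (j - 1) pi c2 c1]) (U1 @ [dd (j + 1) pi c2 c1]) [(l1, n1, m1), (\<mu>, 1, MM)]"
  unfolding goodg_def using c1 c2 pDn wL1 wL2 wU1 wU2 n1 n2 m1 m2 wdd MM0
  by (auto intro!: precell_Bu precell_Bl precell_Q)

end


context twocells begin

fun reg :: "'k ridx \<Rightarrow> ('k list \<times> 'k) set" where
  "reg R0 = {(x, t). dx x = 0}"
| "reg RN2 = {(x, t). dx x \<noteq> 0 \<and> N2 x t}"
| "reg RN1 = {(x, t). dx x \<noteq> 0 \<and> N1 x t}"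
| "reg RF = {(x, t). dx x \<noteq> 0 \<and> FF x t}"
| "reg (RM j \<mu> \<nu>) = {(x, t). dx x \<noteq> 0 \<and> \<not> N2 x t \<and> slice j (dx x) (t - ceval x c1) \<and>
      t - ceval x c1 \<in> LQ \<mu> 1 MM \<and> dx x \<in> LQ \<nu> 1 MM}"

lemma LQ01s: "y \<in> LQ 0 (Suc 0) (Suc 0) \<longleftrightarrow> y = 0" using LQ01 by simp

lemma gcell_mem: "(x, t) \<in> gcell c D Ls Us Ss \<longleftrightarrow> x \<in> D \<and>
      (\<forall>p\<in>set Ls. olt (ord (peval pi x p)) (ord (t - ceval x c))) \<and>
      (\<forall>p\<in>set Us. olt (ord (t - ceval x c)) (ord (peval pi x p))) \<and>
      (\<forall>(lam, n, m)\<in>set Ss. t - ceval x c \<in> LQ lam n m)"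
  by (simp add: gcell_def)

lemma L0: "A1 \<inter> A2 \<inter> reg R0 = piece0"
proof (rule set_eqI, clarify)
  fix x t
  show "(x, t) \<in> A1 \<inter> A2 \<inter> reg R0 \<longleftrightarrow> (x, t) \<in> piece0"
  proof (cases "ceval x c2 = ceval x c1")
    case True
    thus ?thesis 
      by (auto simp: A1_def A2_def piece0_def gcell_mem DD_def dx_def LQ01s)
  next
    case False
    thus ?thesis 
      by (auto simp: A1_def A2_def piece0_def gcell_mem DD_def dx_def LQ01s)
  qed
qed

lemma u_eq: "t - ceval x c2 + dx x = t - ceval x c1" by (simp add: dx_def)
lemma w_eq: "t - ceval x c1 - dx x = t - ceval x c2" by (simp add: dx_def)

lemma LN2: "A1 \<inter> A2 \<inter> reg RN2 = pieceN2"
proof (rule set_eqI, clarify)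
  fix x t
  show "(x, t) \<in> A1 \<inter> A2 \<inter> reg RN2 \<longleftrightarrow> (x, t) \<in> pieceN2"
  proof (cases "dx x \<noteq> 0 \<and> N2 x t")
    case True
    have N: "olt (ord (pi powi (int m1 - 1) * dx x)) (ord (t - ceval x c2))" using True by (simp add: N2_def)
    have k: "ord (t - ceval x c1) = ord (dx x)" "t - ceval x c1 \<in> LQ l1 n1 m1 \<longleftrightarrow> dx x \<in> LQ l1 n1 m1"
      using near2[OF _ m1 N, of l1 n1] True unfolding u_eq by auto
    show ?thesis 
      using True k N by (auto simp: A1_def A2_def pieceN2_def gcell_mem Dn_iff Bl_def Bu_def dd_ord' dx_def[symmetric])
  next
    case False
    show ?thesis 
      using False by (auto simp: A1_def A2_def pieceN2_def gcell_mem Dn_iff dd_ord' N2_def)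
  qed
qed

lemma LN1: "A1 \<inter> A2 \<inter> reg RN1 = pieceN1"
proof (rule set_eqI, clarify)
  fix x t
  show "(x, t) \<in> A1 \<inter> A2 \<inter> reg RN1 \<longleftrightarrow> (x, t) \<in> pieceN1"
  proof (cases "dx x \<noteq> 0 \<and> N1 x t")
    case True
    have N: "olt (ord (pi powi (int m2 - 1) * dx x)) (ord (t - ceval x c1))" using True by (simp add: N1_def)
    have k: "ord (t - ceval x c2) = ord (dx x)" "t - ceval x c2 \<in> LQ l2 n2 m2 \<longleftrightarrow> - dx x \<in> LQ l2 n2 m2"
      using near1[OF _ m2 N, of l2 n2] True unfolding w_eq by auto
    have md: "- dx x = ceval x c1 - ceval x c2" by (simp add: dx_def)
    show ?thesis 
      using True k N md by (auto simp: A1_def A2_def pieceN1_def gcell_mem Dn_iff Bl_def Bu_def dd_ord' dx_def[symmetric])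
  next
    case False
    show ?thesis 
      using False by (auto simp: A1_def A2_def pieceN1_def gcell_mem Dn_iff dd_ord' N1_def)
  qed
qed

lemma LF: "A1 \<inter> A2 \<inter> reg RF = pieceF"
proof (rule set_eqI, clarify)
  fix x t
  show "(x, t) \<in> A1 \<inter> A2 \<inter> reg RF \<longleftrightarrow> (x, t) \<in> pieceF"
  proof (cases "dx x \<noteq> 0 \<and> FF x t")
    case True
    have N: "olt (ord (t - ceval x c1)) (ord (pi powi (1 - int m2) * dx x))" using True by (simp add: FF_def)
    have k: "ord (t - ceval x c2) = ord (t - ceval x c1)" "t - ceval x c2 \<in> LQ l2 n2 m2 \<longleftrightarrow> t - ceval x c1 \<in> LQ l2 n2 m2"
      using far[OF _ m2 N, of l2 n2] True unfolding w_eq by auto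
    show ?thesis 
      using True k N by (auto simp: A1_def A2_def pieceF_def gcell_mem Dn_iff dd_ord' dx_def[symmetric])
  next
    case False
    show ?thesis 
      using False by (auto simp: A1_def A2_def pieceF_def gcell_mem Dn_iff dd_ord' FF_def)
  qed
qed

end


context twocells begin

lemma LM: assumes j: "1 - int m2 \<le> j"
  shows "A1 \<inter> A2 \<inter> reg (RM j \<mu> \<nu>) = {} \<or> (\<exists>\<theta> i. A1 \<inter> A2 \<inter> reg (RM j \<mu> \<nu>) = pieceM j \<mu> \<nu> \<theta> i)"
proof -
  define Gp where "Gp = {(d, u). d \<noteq> 0 \<and> slice j d u \<and> u \<in> LQ \<mu> 1 MM \<and> d \<in> LQ \<nu> 1 MM}"
  have sub: "(dx x, t - ceval x c1) \<in> Gp" if "(x, t) \<in> reg (RM j \<mu> \<nu>)" for x t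
    using that by (simp add: Gp_def)
  show ?thesis
  proof (cases "Gp = {}")
    case True
    hence "reg (RM j \<mu> \<nu>) = {}" using sub by fast
    thus ?thesis by (intro disjI1) (simp del: reg.simps)
  next
    case False
    then obtain d0 u0 where g0: "(d0, u0) \<in> Gp" by auto
    hence g0': "d0 \<noteq> 0" "slice j d0 u0" "u0 \<in> LQ \<mu> 1 MM" "d0 \<in> LQ \<nu> 1 MM" by (auto simp: Gp_def)
    have su0: "u0 \<noteq> 0" "v u0 = v (pi powi j * d0)" using slice_iff[OF g0'(1)] g0'(2) by auto
    define \<theta> where "\<theta> = u0 / d0"
    have th0: "\<theta> \<noteq> 0" using su0 g0' by (simp add: \<theta>_def)
    have vth: "v \<theta> = v (pi powi j)" using su0 g0' by (simp add: \<theta>_def vdiv v_pd)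
    have tc: "cg MM ((u / d) / \<theta>) 1" if "(d, u) \<in> Gp" for d u
      using that theta_const[OF MM0 _ _ _ _ g0'] by (simp add: Gp_def \<theta>_def)
    show ?thesis
    proof (cases "\<theta> = 1 \<or> v (pi powi int m1) \<le> v (\<theta> - 1)")
      case True
      have "reg (RM j \<mu> \<nu>) = {}"
      proof (rule ccontr)
        assume "reg (RM j \<mu> \<nu>) \<noteq> {}"
        then obtain x t where xt: "(x, t) \<in> reg (RM j \<mu> \<nu>)" by auto
        have G: "(dx x, t - ceval x c1) \<in> Gp" by (rule sub[OF xt])
        have "olt (ord (pi powi (int m1 - 1) * dx x)) (ord (t - ceval x c1 - dx x))"
          using middle_A[OF m1 m2 MM_def th0 vth j True _ tc[OF G]] xt by simp
        hence "N2 x t" by (simp add: N2_def w_eq)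
        thus False using xt by simp
      qed
      thus ?thesis by (intro disjI1) (simp del: reg.simps)
    next
      case False
      hence th1: "\<theta> \<noteq> 1" and lt: "v (\<theta> - 1) < v (pi powi int m1)" by auto
      have lo: "v (pi powi (- int m2)) \<le> v (\<theta> - 1)" by (rule theta_lower[OF th0 th1 vth j])
      obtain i where i: "- int m2 \<le> i" "i < int m1" "v (\<theta> - 1) = v (pi powi i)"
        using multiple[OF lo lt] by blast
      have i1: "i \<le> int m1 - 1" using i by simp
      have "A1 \<inter> A2 \<inter> reg (RM j \<mu> \<nu>) = pieceM j \<mu> \<nu> \<theta> i"
      proof (rule set_eqI, clarify)
        fix x t
        show "(x, t) \<in> A1 \<inter> A2 \<inter> reg (RM j \<mu> \<nu>) \<longleftrightarrow> (x, t) \<in> pieceM j \<mu> \<nu> \<theta> i"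
        proof (cases "(dx x, t - ceval x c1) \<in> Gp")
          case True
          have dnz: "dx x \<noteq> 0" using True by (simp add: Gp_def)
          have mb: "ord (t - ceval x c1 - dx x) = ord (pi powi i * dx x) \<and>
              (t - ceval x c1 - dx x \<in> LQ l2 n2 m2 \<longleftrightarrow> dx x \<in> LQ (l2 / (\<theta> - 1)) n2 m2) \<and>
              \<not> olt (ord (pi powi (int m1 - 1) * dx x)) (ord (t - ceval x c1 - dx x))"
            by (rule middle_B[OF m1 m2 MM_def th0 vth j th1 i(3) i1 dnz tc[OF True]])
          hence k: "ord (t - ceval x c2) = ord (pi powi i * dx x)"
              "t - ceval x c2 \<in> LQ l2 n2 m2 \<longleftrightarrow> dx x \<in> LQ (l2 / (\<theta> - 1)) n2 m2"
              "\<not> N2 x t"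
            unfolding w_eq N2_def by auto
          have G: "slice j (dx x) (t - ceval x c1)" "t - ceval x c1 \<in> LQ \<mu> 1 MM" "dx x \<in> LQ \<nu> 1 MM"
            using True by (auto simp: Gp_def)
          show ?thesis using k G dnz
            by (auto simp: A1_def A2_def pieceM_def gcell_mem Dn_iff Bl_def Bu_def dd_ord' slice_def dx_def[symmetric])
        next
          case False
          have "(x, t) \<notin> reg (RM j \<mu> \<nu>)" using sub False by blast
          moreover have "(x, t) \<notin> pieceM j \<mu> \<nu> \<theta> i"
          proof
            assume "(x, t) \<in> pieceM j \<mu> \<nu> \<theta> i"
            hence "dx x \<noteq> 0" "slice j (dx x) (t - ceval x c1)" "t - ceval x c1 \<in> LQ \<mu> 1 MM" "dx x \<in> LQ \<nu> 1 MM"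
              by (auto simp: pieceM_def gcell_mem Dn_iff dd_ord' slice_def dx_def[symmetric])
            thus False using False by (simp add: Gp_def)
          qed
          ultimately show ?thesis by blast
        qed
      qed
      thus ?thesis by blast
    qed
  qed
qed

end


context twocells begin

lemma p1: "dx x \<noteq> 0 \<Longrightarrow> N1 x t \<Longrightarrow> N2 x t \<Longrightarrow> False"
  using N1_N2[of "dx x" m1 m2 "t - ceval x c1"] m1 m2 by (simp add: N1_def N2_def w_eq)
lemma p2: "dx x \<noteq> 0 \<Longrightarrow> FF x t \<Longrightarrow> N2 x t \<Longrightarrow> False"
  using F_N2[of "dx x" m1 m2 "t - ceval x c1"] m1 m2 by (simp add: FF_def N2_def w_eq)
lemma p3: "dx x \<noteq> 0 \<Longrightarrow> FF x t \<Longrightarrow> N1 x t \<Longrightarrow> False"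
  using F_N1[of "dx x" m2 "t - ceval x c1"] m2 by (simp add: FF_def N1_def)
lemma p4: "dx x \<noteq> 0 \<Longrightarrow> j \<le> int m2 - 1 \<Longrightarrow> slice j (dx x) (t - ceval x c1) \<Longrightarrow> N1 x t \<Longrightarrow> False"
  using slice_N1[of "dx x" j m2 "t - ceval x c1"] by (simp add: N1_def)
lemma p5: "dx x \<noteq> 0 \<Longrightarrow> 1 - int m2 \<le> j \<Longrightarrow> slice j (dx x) (t - ceval x c1) \<Longrightarrow> FF x t \<Longrightarrow> False"
  using slice_F[of "dx x" m2 j "t - ceval x c1"] by (simp add: FF_def)

definition Idx :: "'k set \<Rightarrow> 'k ridx set" where
  "Idx R = {R0, RN2, RN1, RF} \<union> (\<lambda>(j, \<mu>, \<nu>). RM j \<mu> \<nu>) ` ({1 - int m2 .. int m2 - 1} \<times> R \<times> R)"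

lemma reg_disj: assumes R: "\<forall>\<mu>\<in>R. \<forall>\<mu>'\<in>R. \<mu> \<noteq> \<mu>' \<longrightarrow> LQ \<mu> 1 MM \<inter> LQ \<mu>' 1 MM = {}"
  and i: "i \<in> Idx R" "i' \<in> Idx R" "i \<noteq> i'" shows "reg i \<inter> reg i' = {}"
proof (rule ccontr)
  assume "reg i \<inter> reg i' \<noteq> {}"
  then obtain x t where xt: "(x, t) \<in> reg i" "(x, t) \<in> reg i'" by auto
  have p7: "\<mu> = \<mu>'" if "\<mu> \<in> R" "\<mu>' \<in> R" "y \<in> LQ \<mu> 1 MM" "y \<in> LQ \<mu>' 1 MM" for \<mu> \<mu>' y
    using R that by blast
  have p6: "j = j'" if "dx x \<noteq> 0" "slice j (dx x) (t - ceval x c1)" "slice j' (dx x) (t - ceval x c1)" for j j'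
    using slice_unique that by blast
  show False
  proof (cases i)
    case (RM j \<mu> \<nu>)
    note iM = RM
    have ji: "1 - int m2 \<le> j" "j \<le> int m2 - 1" "\<mu> \<in> R" "\<nu> \<in> R" using i(1) iM by (auto simp: Idx_def)
    show False
    proof (cases i')
      case (RM j' \<mu>' \<nu>')
      have ji': "\<mu>' \<in> R" "\<nu>' \<in> R" using i(2) RM by (auto simp: Idx_def)
      have "j = j'" using p6 xt iM RM by auto
      moreover have "\<mu> = \<mu>'" using p7[OF ji(3) ji'(1)] xt iM RM by auto
      moreover have "\<nu> = \<nu>'" using p7[OF ji(4) ji'(2)] xt iM RM by auto
      ultimately show False using i(3) iM RM by simp
    qed (use xt iM ji p4 p5 in auto)
  next
    case R0 thus False using xt i(3) by (cases i') auto
  next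
    case RN2 thus False using xt i(3) i(2) p1 p2 by (cases i') (auto simp: Idx_def)
  next
    case RN1 thus False using xt i(3) i(2) p1 p3 p4 by (cases i') (auto simp: Idx_def)
  next
    case RF thus False using xt i(3) i(2) p2 p3 p5 by (cases i') (auto simp: Idx_def)
  qed
qed

lemma reg_cover: assumes R: "\<forall>y. \<exists>\<mu>\<in>R. y \<in> LQ \<mu> 1 MM" shows "\<exists>i\<in>Idx R. (x, t) \<in> reg i"
proof (cases "dx x = 0")
  case True thus ?thesis by (intro bexI[of _ R0]) (auto simp: Idx_def)
next
  case d: False
  show ?thesis
  proof (cases "N2 x t")
    case True thus ?thesis using d by (intro bexI[of _ RN2]) (auto simp: Idx_def)
  next
    case n2: False
    show ?thesis
    proof (cases "N1 x t")
      case True thus ?thesis using d by (intro bexI[of _ RN1]) (auto simp: Idx_def)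
    next
      case n1: False
      show ?thesis
      proof (cases "FF x t")
        case True thus ?thesis using d by (intro bexI[of _ RF]) (auto simp: Idx_def)
      next
        case nf: False
        obtain j where j: "1 - int m2 \<le> j" "j \<le> int m2 - 1" "slice j (dx x) (t - ceval x c1)"
          using slice_cover[OF d m2] n1 nf by (auto simp: N1_def FF_def)
        obtain \<mu> where \<mu>: "\<mu> \<in> R" "t - ceval x c1 \<in> LQ \<mu> 1 MM" using R by blast
        obtain \<nu> where \<nu>: "\<nu> \<in> R" "dx x \<in> LQ \<nu> 1 MM" using R by blast
        have "RM j \<mu> \<nu> \<in> Idx R" using j \<mu> \<nu> by (force simp: Idx_def)
        moreover have "(x, t) \<in> reg (RM j \<mu> \<nu>)" using d n2 j \<mu> \<nu> by simp
        ultimately show ?thesis by blast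
      qed
    qed
  qed
qed

lemma main_decomp: "decompS k {c1, c2} (A1 \<inter> A2)"
proof -
  obtain R where R: "finite R" "\<forall>t. \<exists>\<mu>\<in>R. t \<in> LQ \<mu> 1 MM"
    "\<forall>\<mu>\<in>R. \<forall>\<mu>'\<in>R. \<mu> \<noteq> \<mu>' \<longrightarrow> LQ \<mu> 1 MM \<inter> LQ \<mu>' 1 MM = {}"
    using cosets[OF zero_less_one MM0] by (elim exE conjE) simp
  have fin: "finite (Idx R)" using R(1) by (simp add: Idx_def)
  have eq: "A1 \<inter> A2 = (\<Union>i\<in>Idx R. A1 \<inter> A2 \<inter> reg i)"
  proof (rule set_eqI, clarify)
    fix x t
    obtain i where "i \<in> Idx R" "(x, t) \<in> reg i" using reg_cover[OF R(2), of x t] by blast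
    thus "(x, t) \<in> A1 \<inter> A2 \<longleftrightarrow> (x, t) \<in> (\<Union>i\<in>Idx R. A1 \<inter> A2 \<inter> reg i)" by blast
  qed
  have each: "decompS k {c1, c2} (A1 \<inter> A2 \<inter> reg i)" if "i \<in> Idx R" for i
  proof (cases i)
    case R0
    have "decompS k {c1} piece0" unfolding piece0_def by (rule gcell_decomp[OF good0])
    hence "decompS k {c1, c2} piece0" by (rule decompS_mono) simp
    thus ?thesis unfolding R0 L0 .
  next
    case RN2
    have "decompS k {c2} pieceN2" unfolding pieceN2_def by (rule gcell_decomp[OF goodN2])
    hence "decompS k {c1, c2} pieceN2" by (rule decompS_mono) simp
    thus ?thesis unfolding RN2 LN2 .
  next
    case RN1
    have "decompS k {c1} pieceN1" unfolding pieceN1_def by (rule gcell_decomp[OF goodN1])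
    hence "decompS k {c1, c2} pieceN1" by (rule decompS_mono) simp
    thus ?thesis unfolding RN1 LN1 .
  next
    case RF
    have "decompS k {c1} pieceF" unfolding pieceF_def by (rule gcell_decomp[OF goodF])
    hence "decompS k {c1, c2} pieceF" by (rule decompS_mono) simp
    thus ?thesis unfolding RF LF .
  next
    case (RM j \<mu> \<nu>)
    have j: "1 - int m2 \<le> j" using that RM by (auto simp: Idx_def)
    show ?thesis
    proof (cases "A1 \<inter> A2 \<inter> reg (RM j \<mu> \<nu>) = {}")
      case True thus ?thesis using RM decompS_empty by (simp del: reg.simps)
    next
      case False
      then obtain \<theta> i where e: "A1 \<inter> A2 \<inter> reg (RM j \<mu> \<nu>) = pieceM j \<mu> \<nu> \<theta> i" using LM[OF j] by blast
      have "decompS k {c1} (pieceM j \<mu> \<nu> \<theta> i)" unfolding pieceM_def by (rule gcell_decomp[OF goodM])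
      hence "decompS k {c1, c2} (pieceM j \<mu> \<nu> \<theta> i)" by (rule decompS_mono) simp
      thus ?thesis using RM e by (simp del: reg.simps)
    qed
  qed
  have "decompS k {c1, c2} (\<Union>i\<in>Idx R. A1 \<inter> A2 \<inter> reg i)"
  proof (rule decompS_Union[OF fin each])
    fix i i' assume "i \<in> Idx R" "i' \<in> Idx R" "i \<noteq> i'"
    hence "reg i \<inter> reg i' = {}" by (rule reg_disj[OF R(3)])
    thus "A1 \<inter> A2 \<inter> reg i \<inter> (A1 \<inter> A2 \<inter> reg i') = {}" by blast
  qed
  thus ?thesis by (simp only: eq[symmetric])
qed

end


context fqz begin

lemma cell_gcell: assumes "is_cell v pi k A c"
  shows "\<exists>D L U l n m. goodg k c D L U [(l, n, m)] \<and> A = gcell c D L U [(l, n, m)]"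
proof -
  obtain D lam n m a1 a2 where h: "cwf k c" "precell v pi k D" "0 < n" "0 < m"
    "\<forall>p. a1 = Some p \<longrightarrow> pwf k p" "\<forall>p. a2 = Some p \<longrightarrow> pwf k p"
    "A = {(x, t). x \<in> D \<and>
              (case a1 of None \<Rightarrow> True
                 | Some p \<Rightarrow> olt (ordv v (peval pi x p)) (ordv v (t - ceval x c))) \<and>
              (case a2 of None \<Rightarrow> True
                 | Some p \<Rightarrow> olt (ordv v (t - ceval x c)) (ordv v (peval pi x p))) \<and>
              t - ceval x c \<in> lamQ v pi lam n m}"
    using assms unfolding is_cell_def by blast
  define L where "L = (case a1 of None \<Rightarrow> [] | Some p \<Rightarrow> [p])"
  define U where "U = (case a2 of None \<Rightarrow> [] | Some p \<Rightarrow> [p])"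
  have g: "goodg k c D L U [(lam, n, m)]"
    using h by (cases a1; cases a2) (auto simp: goodg_def L_def U_def)
  have "A = gcell c D L U [(lam, n, m)]"
    unfolding h(7) gcell_def L_def U_def by (cases a1; cases a2) auto
  thus ?thesis using g by blast
qed

end

theorem proposition2p4:
  fixes v :: "'k::field \<Rightarrow> 'g::linordered_ab_group_add"
    and pi :: 'k and q k :: nat
    and A1 A2 :: "('k list \<times> 'k) set" and c1 c2 :: "'k center"
  assumes "FqZ_field v pi q"
    and "is_cell v pi k A1 c1"
    and "is_cell v pi k A2 c2"
  shows "\<exists>F. finite F \<and> pairwise disjnt F \<and> \<Union>F = A1 \<inter> A2 \<and>
           (\<forall>C\<in>F. is_cell v pi k C c1 \<or> is_cell v pi k C c2)"
proof -
  interpret fqz v pi q by (rule fqz.intro) (rule assms(1))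
  obtain D1 L1 U1 l1 n1 m1 where g1: "goodg k c1 D1 L1 U1 [(l1, n1, m1)]" "A1 = gcell c1 D1 L1 U1 [(l1, n1, m1)]"
    using cell_gcell[OF assms(2)] by blast
  obtain D2 L2 U2 l2 n2 m2 where g2: "goodg k c2 D2 L2 U2 [(l2, n2, m2)]" "A2 = gcell c2 D2 L2 U2 [(l2, n2, m2)]"
    using cell_gcell[OF assms(3)] by blast
  interpret T: twocells v pi q k c1 c2 D1 D2 L1 L2 U1 U2 l1 l2 n1 n2 m1 m2
    by (rule twocells.intro[OF fqz_axioms], unfold_locales) (rule g1(1), rule g2(1))
  have "decompS k {c1, c2} (A1 \<inter> A2)"
    using T.main_decomp unfolding T.A1_def T.A2_def g1(2) g2(2) .
  then obtain F where F: "finite F" "pairwise disjnt F" "\<Union>F = A1 \<inter> A2" "\<forall>C\<in>F. \<exists>c\<in>{c1, c2}. is_cell v pi k C c"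
    unfolding decompS_def by (elim exE conjE) simp
  have "\<forall>C\<in>F. is_cell v pi k C c1 \<or> is_cell v pi k C c2" using F(4) by auto
  thus ?thesis using F by blast
qed


end
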